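(* Let $(\mathcal G,(\cdot,\cdot),\mathcal H)$ be a generalized reductive Lie algebra with root system $R$ and let $\dot{\mathcal H}_1,\dots,\dot{\mathcal H}_k$, $\mathcal H(R)$, $\mathcal H^0(R)$ be as in the context. Then (i) the form $(\cdot,\cdot)$ restricted to each $\dot{\mathcal H}_i$ is nondegenerate; (ii) $\mathcal H(R)=\mathcal H^0(R)\oplus\big(\bigoplus_{i=1}^k\dot{\mathcal H}_i\big)$; (iii) $\mathcal H^0(R)=\mathrm{span}_{\mathbb C}\{t_\delta:\delta\in R^0\}$.
   Context: GRLA: $\mathcal G$ complex Lie algebra, $\mathcal H$ subalgebra, $(\cdot,\cdot)$ bilinear form with (GR1) form symmetric, nondegenerate, invariant; (GR2) $\mathcal H$ nontrivial finite-dimensional abelian, self-centralizing, $\mathrm{ad}(h)$ diagonalizable; root spaces $\mathcal G_\alpha$, root system $R=\{\alpha\in\mathcal H^*:\mathcal G_\alpha\ne0\}$; $t_\alpha\in\mathcal H$ with $(t_\alpha,h)=\alpha(h)$, $(\alpha,\beta):=(t_\alpha,t_\beta)$; $R^\times=\{\alpha:(\alpha,\alpha)\ne0\}$, $R^0=R\setminus R^\times$; (GR3) $\mathrm{ad}(x)$ locally nilpotent for $x\in\mathcal G_\alpha$, $\alpha\in R^\times$; (GR4) $R$ discrete; (GR5) $R^\times\neq\emptyset$. Let $R^\times=R^\times_1\cup\dots\cup R^\times_k$ be the partition into classes of the equivalence relation generated by $\alpha\sim\beta$ if $(\alpha,\beta)\ne0$. Let $\mathcal V$ be the real span of $R$,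 $\mathcal V^0=\{v\in\mathcal V:(v,\mathcal V)=0\}$, $\bar{\ }:\mathcal V\to\mathcal V/\mathcal V^0$, $\bar{\mathcal V}_i$ the image of the real span of $R_i^\times$ and $\bar R_i=\{\bar\alpha:\alpha\in R_i^\times\}\cup\{0\}$; for suitable $c_i\neq0$, $\bar R_i$ is an irreducible finite root system in $\bar{\mathcal V}_i$ with respect to $c_i(\cdot,\cdot)$. Choose a base $\{\bar\alpha_{i1},\dots,\bar\alpha_{i\ell_i}\}$ of $\bar R_i$, preimages $\alpha_{ij}\in R_i^\times$, let $\dot{\mathcal V}_i$ be their real span and $\dot R_i=\{\alpha\in\dot{\mathcal V}_i:\bar\alpha\in\bar R_i\}$. Set $\dot{\mathcal H}_i=\mathrm{span}_{\mathbb C}\{t_\alpha:\alpha\in\dot R_i\}$, $\mathcal H(R)=\mathrm{span}_{\mathbb C}\{t_\alpha:\alpha\in R\}$ and $\mathcal H^0(R)=\{h\in\mathcal H(R):(h,\mathcal H(R))=\{0\}\}$. *)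

theory Defs
  imports Main Complex_Main
begin

text \<open>Elements of the dual H* are modelled as functions 'g => complex which are complex linear
on H and vanish outside H (canonical representatives).\<close>

definition lie_algebra :: "(complex \<Rightarrow> 'g::ab_group_add \<Rightarrow> 'g) \<Rightarrow> ('g \<Rightarrow> 'g \<Rightarrow> 'g) \<Rightarrow> bool" where
  "lie_algebra smult br \<longleftrightarrow> vector_space smult \<and>
     (\<forall>x y z. br (x + y) z = br x z + br y z) \<and>
     (\<forall>c x y. br (smult c x) y = smult c (br x y)) \<and>
     (\<forall>x y z. br x (y + z) = br x y + br x z) \<and>
     (\<forall>c x y. br x (smult c y) = smult c (br x y)) \<and>
     (\<forall>x. br x x = 0) \<and>
     (\<forall>x y z. br x (br y z) + br y (br z x) + br z (br x y) = 0)"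

definition dual_of :: "(complex \<Rightarrow> 'g::ab_group_add \<Rightarrow> 'g) \<Rightarrow> 'g set \<Rightarrow> ('g \<Rightarrow> complex) \<Rightarrow> bool" where
  "dual_of smult H f \<longleftrightarrow> (\<forall>x\<in>H. \<forall>y\<in>H. f (x + y) = f x + f y) \<and>
     (\<forall>c. \<forall>x\<in>H. f (smult c x) = c * f x) \<and> (\<forall>x. x \<notin> H \<longrightarrow> f x = 0)"

definition root_space :: "('g \<Rightarrow> 'g \<Rightarrow> 'g) \<Rightarrow> (complex \<Rightarrow> 'g \<Rightarrow> 'g) \<Rightarrow> 'g set \<Rightarrow> ('g \<Rightarrow> complex) \<Rightarrow> 'g set" where
  "root_space br smult H \<alpha> = {x. \<forall>h\<in>H. br h x = smult (\<alpha> h) x}"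

definition roots :: "('g \<Rightarrow> 'g \<Rightarrow> 'g) \<Rightarrow> (complex \<Rightarrow> 'g::ab_group_add \<Rightarrow> 'g) \<Rightarrow> 'g set \<Rightarrow> ('g \<Rightarrow> complex) set" where
  "roots br smult H = {\<alpha>. dual_of smult H \<alpha> \<and> root_space br smult H \<alpha> \<noteq> {0}}"

definition tvec :: "('g \<Rightarrow> 'g \<Rightarrow> complex) \<Rightarrow> 'g set \<Rightarrow> ('g \<Rightarrow> complex) \<Rightarrow> 'g" where
  "tvec B H \<alpha> = (THE t. t \<in> H \<and> (\<forall>h\<in>H. B t h = \<alpha> h))"

definition rform :: "('g \<Rightarrow> 'g \<Rightarrow> complex) \<Rightarrow> 'g set \<Rightarrow> ('g \<Rightarrow> complex) \<Rightarrow> ('g \<Rightarrow> complex) \<Rightarrow> complex" where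
  "rform B H \<alpha> \<beta> = B (tvec B H \<alpha>) (tvec B H \<beta>)"

definition nonisotropic_roots where
  "nonisotropic_roots br smult B H = {\<alpha> \<in> roots br smult H. rform B H \<alpha> \<alpha> \<noteq> 0}"

definition isotropic_roots where
  "isotropic_roots br smult B H = roots br smult H - nonisotropic_roots br smult B H"

text \<open>Discreteness of R in H* (finite dimensional, natural topology = topology of pointwise
convergence on H).\<close>
definition discrete_dual :: "'g set \<Rightarrow> ('g \<Rightarrow> complex) set \<Rightarrow> bool" where
  "discrete_dual H R \<longleftrightarrow> (\<forall>\<alpha>\<in>R. \<exists>F \<epsilon>. finite F \<and> F \<subseteq> H \<and> \<epsilon> > 0 \<and>
      (\<forall>\<beta>\<in>R. (\<forall>h\<in>F. cmod (\<beta> h - \<alpha> h) < \<epsilon>) \<longrightarrow> \<beta> = \<alpha>))"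

definition GRLA :: "(complex \<Rightarrow> 'g::ab_group_add \<Rightarrow> 'g) \<Rightarrow> ('g \<Rightarrow> 'g \<Rightarrow> 'g) \<Rightarrow> ('g \<Rightarrow> 'g \<Rightarrow> complex) \<Rightarrow> 'g set \<Rightarrow> bool" where
  "GRLA smult br B H \<longleftrightarrow>
     lie_algebra smult br \<and>
     \<comment> \<open>GR1: symmetric, bilinear, nondegenerate, invariant form\<close>
     (\<forall>x y z. B (x + y) z = B x z + B y z) \<and>
     (\<forall>c x y. B (smult c x) y = c * B x y) \<and>
     (\<forall>x y. B x y = B y x) \<and>
     (\<forall>x. (\<forall>y. B x y = 0) \<longrightarrow> x = 0) \<and>
     (\<forall>x y z. B (br x y) z = B x (br y z)) \<and>
     \<comment> \<open>GR2\<close>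
     module.subspace smult H \<and>
     (\<forall>x\<in>H. \<forall>y\<in>H. br x y \<in> H) \<and>
     H \<noteq> {0} \<and>
     (\<exists>S. finite S \<and> H = module.span smult S) \<and>
     (\<forall>x\<in>H. \<forall>y\<in>H. br x y = 0) \<and>
     {x. \<forall>h\<in>H. br h x = 0} = H \<and>
     (\<forall>h\<in>H. module.span smult {x. \<exists>c. br h x = smult c x} = UNIV) \<and>
     \<comment> \<open>GR3\<close>
     (\<forall>\<alpha>\<in>nonisotropic_roots br smult B H. \<forall>x\<in>root_space br smult H \<alpha>.
         \<forall>y. \<exists>n. (br x ^^ n) y = 0) \<and>
     \<comment> \<open>GR4\<close>
     discrete_dual H (roots br smult H) \<and>
     \<comment> \<open>GR5\<close>
     nonisotropic_roots br smult B H \<noteq> {}"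

definition rcomb :: "(('g \<Rightarrow> complex) \<Rightarrow> real) \<Rightarrow> ('g \<Rightarrow> complex) set \<Rightarrow> ('g \<Rightarrow> complex)" where
  "rcomb c S = (\<lambda>x. \<Sum>\<beta>\<in>S. complex_of_real (c \<beta>) * \<beta> x)"

definition real_span :: "('g \<Rightarrow> complex) set \<Rightarrow> ('g \<Rightarrow> complex) set" where
  "real_span S = {rcomb c F | c F. finite F \<and> F \<subseteq> S}"

definition Vsp where "Vsp br smult H = real_span (roots br smult H)"

definition V0 where
  "V0 br smult B H = {v \<in> Vsp br smult H. \<forall>w\<in>Vsp br smult H. rform B H v w = 0}"

definition root_rel where
  "root_rel br smult B H = {(\<alpha>, \<beta>). \<alpha> \<in> nonisotropic_roots br smult B H \<and>
       \<beta> \<in> nonisotropic_roots br smult B H \<and> rform B H \<alpha> \<beta> \<noteq> 0}"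

definition root_classes where
  "root_classes br smult B H = nonisotropic_roots br smult B H //
      ((root_rel br smult B H \<union> (root_rel br smult B H)\<inverse>)\<^sup>+ \<union> Id_on (nonisotropic_roots br smult B H))"

text \<open>Bs is a set of preimages alpha_{i1},...,alpha_{il} in the class C of a base of the finite
root system bar R_i (images in V/V^0): the images are linearly independent in V/V^0 and each
bar alpha (alpha in C) is an integral combination with coefficients all of the same sign.\<close>
definition base_preimage where
  "base_preimage br smult B H C Bs \<longleftrightarrow> finite Bs \<and> Bs \<subseteq> C \<and>
     (\<forall>c. rcomb c Bs \<in> V0 br smult B H \<longrightarrow> (\<forall>\<beta>\<in>Bs. c \<beta> = 0)) \<and>
     (\<forall>\<alpha>\<in>C. \<exists>n. 
        ((\<forall>\<beta>\<in>Bs. n \<beta> \<ge> 0) \<or> (\<forall>\<beta>\<in>Bs. n \<beta> \<le> 0)) \<and>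
        (\<lambda>x. \<alpha> x - rcomb (\<lambda>\<beta>. real_of_int (n \<beta>)) Bs x) \<in> V0 br smult B H)"

text \<open>dot R_i = {alpha in dot V_i : bar alpha in bar R_i}, with bar R_i = image of C union {0}.\<close>
definition Rdot where
  "Rdot br smult B H C Bs = {\<alpha> \<in> real_span Bs.
      \<exists>\<beta> \<in> C \<union> {(\<lambda>_. 0)}. (\<lambda>x. \<alpha> x - \<beta> x) \<in> V0 br smult B H}"

definition Hdot where
  "Hdot br smult B H C Bs = module.span smult (tvec B H ` Rdot br smult B H C Bs)"

definition HR where
  "HR br smult B H = module.span smult (tvec B H ` roots br smult H)"

definition HR0 where
  "HR0 br smult B H = {h \<in> HR br smult B H. \<forall>h'\<in>HR br smult B H. B h h' = 0}"

end

theory Submission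
  imports Defs
begin

locale grla_ctx =
  fixes smult :: "complex \<Rightarrow> 'g::ab_group_add \<Rightarrow> 'g"
    and br :: "'g \<Rightarrow> 'g \<Rightarrow> 'g"
    and B :: "'g \<Rightarrow> 'g \<Rightarrow> complex"
    and H :: "'g set"
  assumes grla: "GRLA smult br B H"
begin

lemma vs: "vector_space smult"
  using grla unfolding GRLA_def lie_algebra_def by blast

sublocale vector_space smult by (rule vs)

lemmas GF = grla[unfolded GRLA_def lie_algebra_def]
lemma br_addL: "br (x + y) z = br x z + br y z" using GF by auto
lemma br_smultL: "br (smult c x) y = smult c (br x y)" using GF by auto
lemma br_addR: "br x (y + z) = br x y + br x z" using GF by auto
lemma br_smultR: "br x (smult c y) = smult c (br x y)" using GF by auto
lemma br_self: "br x x = 0" using GF by auto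
lemma jacobi: "br x (br y z) + br y (br z x) + br z (br x y) = 0" using GF by auto

lemma B_addL: "B (x + y) z = B x z + B y z" using GF by auto
lemma B_smultL: "B (smult c x) y = c * B x y" using GF by auto
lemma B_sym: "B x y = B y x" using GF by auto
lemma B_nondeg: "(\<forall>y. B x y = 0) \<Longrightarrow> x = 0" using GF by auto
lemma B_inv: "B (br x y) z = B x (br y z)" using GF by auto

lemma H_sub: "subspace H" using GF by auto
lemma H_br: "x \<in> H \<Longrightarrow> y \<in> H \<Longrightarrow> br x y = 0" using GF by auto
lemma H_ne: "H \<noteq> {0}" using GF by auto
lemma H_fin: "\<exists>S. finite S \<and> H = span S" using GF by auto
lemma H_cent: "{x. \<forall>h\<in>H. br h x = 0} = H" using GF by auto
lemma H_diag: "h \<in> H \<Longrightarrow> span {x. \<exists>c. br h x = smult c x} = UNIV" using GF by auto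
lemma GR3: "\<alpha> \<in> nonisotropic_roots br smult B H \<Longrightarrow> x \<in> root_space br smult H \<alpha> \<Longrightarrow> \<exists>n. (br x ^^ n) y = 0"
  using GF by auto

interpretation brL: additive "\<lambda>x. br x y" for y by standard (rule br_addL)
interpretation brR: additive "\<lambda>y. br x y" for x by standard (rule br_addR)
interpretation BL: additive "\<lambda>x. B x y" for y by standard (rule B_addL)

lemma br_0L[simp]: "br 0 x = 0" by (rule brL.zero)
lemma br_0R[simp]: "br x 0 = 0" by (rule brR.zero)
lemma br_negL: "br (-x) y = - br x y" by (rule brL.minus)
lemma br_negR: "br x (-y) = - br x y" by (rule brR.minus)
lemma br_diffL: "br (x - y) z = br x z - br y z" by (rule brL.diff)
lemma br_diffR: "br x (y - z) = br x y - br x z" by (rule brR.diff)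
lemma br_sumL: "br (sum f A) y = (\<Sum>a\<in>A. br (f a) y)" by (rule brL.sum)
lemma br_sumR: "br x (sum f A) = (\<Sum>a\<in>A. br x (f a))" by (rule brR.sum)
lemma B_0L[simp]: "B 0 x = 0" by (rule BL.zero)
lemma B_0R[simp]: "B x 0 = 0" using B_sym[of x 0] by simp
lemma B_addR: "B x (y + z) = B x y + B x z" using B_addL B_sym by metis
lemma B_smultR: "B x (smult c y) = c * B x y" using B_smultL B_sym by metis
lemma B_negL: "B (-x) y = - B x y" by (rule BL.minus)
lemma B_negR: "B x (-y) = - B x y" using B_negL B_sym by metis
lemma B_diffL: "B (x - y) z = B x z - B y z" by (rule BL.diff)
lemma B_diffR: "B x (y - z) = B x y - B x z" using B_diffL B_sym by metis
lemma B_sumL: "B (sum f A) y = (\<Sum>a\<in>A. B (f a) y)" by (rule BL.sum)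
lemma B_sumR: "B x (sum f A) = (\<Sum>a\<in>A. B x (f a))"
  by (subst B_sym, subst B_sumL) (simp add: B_sym)

lemma br_anti: "br x y = - br y x"
proof -
  have "br (x+y) (x+y) = 0" by (rule br_self)
  then have "br x x + br x y + (br y x + br y y) = 0" by (simp add: br_addL br_addR algebra_simps)
  then have "br x y + br y x = 0" by (simp add: br_self)
  then show ?thesis by (simp add: eq_neg_iff_add_eq_0)
qed

lemma br_deriv: "br a (br b y) = br (br a b) y + br b (br a y)"
proof -
  have "br a (br b y) + br b (br y a) + br y (br a b) = 0" by (rule jacobi)
  moreover have "br b (br y a) = - br b (br a y)" by (metis br_anti br_negR)
  moreover have "br y (br a b) = - br (br a b) y" by (rule br_anti)
  ultimately have "br a (br b y) - br b (br a y) - br (br a b) y = 0" by (simp add: algebra_simps)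
  then show ?thesis by (simp add: algebra_simps)
qed

lemma B_inv2: "B (br h x) y = - B x (br h y)"
  by (metis B_inv B_negL br_anti)


abbreviation Gw where "Gw \<mu> \<equiv> root_space br smult H \<mu>"

lemma Gw_iff: "x \<in> Gw \<mu> \<longleftrightarrow> (\<forall>h\<in>H. br h x = smult (\<mu> h) x)"
  by (simp add: root_space_def)

lemma Gw_0[simp]: "0 \<in> Gw \<mu>" by (simp add: Gw_iff)
lemma Gw_add: "x \<in> Gw \<mu> \<Longrightarrow> y \<in> Gw \<mu> \<Longrightarrow> x + y \<in> Gw \<mu>"
  by (simp add: Gw_iff br_addR scale_right_distrib)
lemma Gw_smult: "x \<in> Gw \<mu> \<Longrightarrow> smult c x \<in> Gw \<mu>"
  by (simp add: Gw_iff br_smultR scale_left_commute)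
lemma Gw_neg: "x \<in> Gw \<mu> \<Longrightarrow> - x \<in> Gw \<mu>"
  by (simp add: Gw_iff br_negR)
lemma Gw_diff: "x \<in> Gw \<mu> \<Longrightarrow> y \<in> Gw \<mu> \<Longrightarrow> x - y \<in> Gw \<mu>"
  by (simp add: Gw_iff br_diffR scale_right_diff_distrib)
lemma Gw_subspace: "subspace (Gw \<mu>)"
  unfolding subspace_def using Gw_add Gw_smult by auto
lemma Gw_sum: "(\<And>i. i \<in> A \<Longrightarrow> f i \<in> Gw \<mu>) \<Longrightarrow> sum f A \<in> Gw \<mu>"
  using subspace_sum[OF Gw_subspace] by blast

lemma Gw_br: assumes "x \<in> Gw \<alpha>" "y \<in> Gw \<beta>"
  shows "br x y \<in> Gw (\<lambda>h. \<alpha> h + \<beta> h)"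
  unfolding Gw_iff
proof
  fix h assume h: "h \<in> H"
  have "br h (br x y) = br (br h x) y + br x (br h y)" by (rule br_deriv)
  also have "\<dots> = smult (\<alpha> h + \<beta> h) (br x y)"
    using assms h by (simp add: Gw_iff br_smultL br_smultR scale_left_distrib)
  finally show "br h (br x y) = smult (\<alpha> h + \<beta> h) (br x y)" .
qed

lemma Gw_B: assumes "x \<in> Gw \<alpha>" "y \<in> Gw \<beta>" "h \<in> H" "\<alpha> h + \<beta> h \<noteq> 0"
  shows "B x y = 0"
proof -
  have "B (br h x) y = - B x (br h y)" by (rule B_inv2)
  then have "\<alpha> h * B x y = - (\<beta> h * B x y)"
    using assms by (simp add: Gw_iff B_smultL B_smultR)
  then have "(\<alpha> h + \<beta> h) * B x y = 0" by (simp add: algebra_simps)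
  then show ?thesis using assms(4) by simp
qed

lemma Gw_zero_eq: "Gw (\<lambda>_. 0) = H"
  using H_cent by (simp add: root_space_def)

lemma Gw_H: "h \<in> H \<Longrightarrow> x \<in> Gw \<mu> \<Longrightarrow> br h x = smult (\<mu> h) x"
  by (simp add: Gw_iff)

lemma H_0: "0 \<in> H" using H_sub subspace_0 by blast
lemma H_add: "x \<in> H \<Longrightarrow> y \<in> H \<Longrightarrow> x + y \<in> H" using H_sub subspace_add by blast
lemma H_smult: "x \<in> H \<Longrightarrow> smult c x \<in> H" using H_sub subspace_scale by blast
lemma H_neg: "x \<in> H \<Longrightarrow> - x \<in> H" using H_sub subspace_neg by blast
lemma H_diff: "x \<in> H \<Longrightarrow> y \<in> H \<Longrightarrow> x - y \<in> H" using H_sub subspace_diff by blast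
lemma H_sum: "(\<And>i. i \<in> A \<Longrightarrow> f i \<in> H) \<Longrightarrow> sum f A \<in> H" using H_sub subspace_sum by blast

section \<open>Simultaneous diagonalisation\<close>

definition Eig where "Eig s c = {x. br s x = smult c x}"

lemma eig_indep:
  assumes "finite L" "\<And>l. l \<in> L \<Longrightarrow> w l \<in> Eig s l" "(\<Sum>l\<in>L. w l) = 0"
  shows "\<forall>l\<in>L. w l = 0"
  using assms
proof (induction L arbitrary: w rule: finite_induct)
  case empty then show ?case by simp
next
  case (insert l0 L)
  have s0: "w l0 + (\<Sum>l\<in>L. w l) = 0" using insert by simp
  have "br s (w l0 + (\<Sum>l\<in>L. w l)) = 0" using s0 by simp
  then have s1: "smult l0 (w l0) + (\<Sum>l\<in>L. smult l (w l)) = 0"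
    using insert.prems(1) by (simp add: br_addR br_sumR Eig_def)
  have "smult l0 (w l0 + (\<Sum>l\<in>L. w l)) = 0" using s0 by simp
  then have s2: "smult l0 (w l0) + (\<Sum>l\<in>L. smult l0 (w l)) = 0"
    by (simp add: scale_right_distrib scale_sum_right)
  have e1: "(\<Sum>l\<in>L. smult l (w l)) = - smult l0 (w l0)"
    using s1 by (simp add: eq_neg_iff_add_eq_0 add.commute)
  have e2: "(\<Sum>l\<in>L. smult l0 (w l)) = - smult l0 (w l0)"
    using s2 by (simp add: eq_neg_iff_add_eq_0 add.commute)
  have "(\<Sum>l\<in>L. smult (l - l0) (w l)) = (\<Sum>l\<in>L. smult l (w l)) - (\<Sum>l\<in>L. smult l0 (w l))"
    by (simp add: scale_left_diff_distrib sum_subtractf)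
  then have "(\<Sum>l\<in>L. smult (l - l0) (w l)) = 0" using e1 e2 by simp
  moreover have "\<And>l. l \<in> L \<Longrightarrow> smult (l - l0) (w l) \<in> Eig s l"
    using insert.prems(1) by (simp add: Eig_def br_smultR scale_left_commute)
  ultimately have "\<forall>l\<in>L. smult (l - l0) (w l) = 0"
    using insert.IH[of "\<lambda>l. smult (l - l0) (w l)"] by blast
  then have z: "\<forall>l\<in>L. w l = 0" using insert.hyps(2) by auto
  then have "w l0 = 0" using s0 by simp
  with z show ?case by simp
qed

definition JE where "JE S = {x. \<forall>s\<in>S. \<exists>c. br s x = smult c x}"

lemma Eig_br_comm: assumes "s \<in> H" "s' \<in> H" "x \<in> Eig s l" shows "br s' x \<in> Eig s l"
proof -
  have "br s (br s' x) = br (br s s') x + br s' (br s x)" by (rule br_deriv)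
  then show ?thesis using assms H_br[of s s'] by (simp add: Eig_def br_smultR)
qed

lemma JE_step:
  assumes S: "S \<subseteq> H" and s: "s \<in> H" and v: "v \<in> JE S"
  shows "v \<in> span (JE (insert s S))"
proof -
  have "v \<in> span {x. \<exists>c. br s x = smult c x}" using H_diag[OF s] by simp
  then obtain U r where U: "finite U" "U \<subseteq> {x. \<exists>c. br s x = smult c x}"
    and vU: "v = (\<Sum>u\<in>U. smult (r u) u)"
    unfolding span_explicit by blast
  define ev where "ev u = (SOME c. br s u = smult c u)" for u
  have ev: "u \<in> U \<Longrightarrow> br s u = smult (ev u) u" for u
    unfolding ev_def using U(2) by (auto intro: someI_ex)
  define w where "w l = (\<Sum>u\<in>{u\<in>U. ev u = l}. smult (r u) u)" for l
  have vw: "v = (\<Sum>l\<in>ev ` U. w l)"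
    unfolding vU w_def using U(1) by (rule sum.image_gen)
  have wE: "w l \<in> Eig s l" for l
    unfolding w_def Eig_def
    by (auto simp: br_sumR br_smultR ev scale_sum_right intro!: sum.cong)
  have "w l \<in> JE (insert s S)" if l: "l \<in> ev ` U" for l
    unfolding JE_def mem_Collect_eq
  proof
    fix s' assume s': "s' \<in> insert s S"
    show "\<exists>c. br s' (w l) = smult c (w l)"
    proof (cases "s' = s")
      case True then show ?thesis using wE by (auto simp: Eig_def)
    next
      case False
      then have s'S: "s' \<in> S" using s' by simp
      then obtain c where c: "br s' v = smult c v" using v unfolding JE_def by blast
      have "(\<Sum>l\<in>ev ` U. br s' (w l) - smult c (w l)) = br s' v - smult c v"
        by (simp add: vw br_sumR scale_sum_right sum_subtractf)
      also have "\<dots> = 0" using c by simp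
      finally have sum0: "(\<Sum>l\<in>ev ` U. br s' (w l) - smult c (w l)) = 0" .
      have "\<And>l. br s' (w l) - smult c (w l) \<in> Eig s l"
      proof -
        fix l
        have "br s' (w l) \<in> Eig s l" using Eig_br_comm[OF s _ wE] s'S S by blast
        moreover have "smult c (w l) \<in> Eig s l" using wE
          by (simp add: Eig_def br_smultR scale_left_commute)
        ultimately show "br s' (w l) - smult c (w l) \<in> Eig s l"
          by (simp add: Eig_def br_diffR scale_right_diff_distrib)
      qed
      then have "\<forall>l\<in>ev ` U. br s' (w l) - smult c (w l) = 0"
        using eig_indep[OF _ _ sum0] U(1) by blast
      then show ?thesis using l by auto
    qed
  qed
  then show ?thesis unfolding vw by (intro span_sum span_base) 
qed

lemma JE_span: "finite S \<Longrightarrow> S \<subseteq> H \<Longrightarrow> span (JE S) = UNIV"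
proof (induction S rule: finite_induct)
  case empty then show ?case by (simp add: JE_def)
next
  case (insert s S)
  have "JE S \<subseteq> span (JE (insert s S))" using JE_step insert.prems by blast
  then have "span (JE S) \<subseteq> span (JE (insert s S))"
    using span_minimal subspace_span by blast
  then show ?case using insert by auto
qed

lemma JE_H: "span (JE H) = UNIV"
proof -
  obtain S where S: "finite S" "H = span S" using H_fin by blast
  have SH: "S \<subseteq> H" using S span_superset by blast
  have "JE S \<subseteq> JE H"
  proof
    fix x assume x: "x \<in> JE S"
    have "\<exists>c. br h x = smult c x" if "h \<in> span S" for h
    proof (rule span_induct[OF that])
      show "\<And>h. h \<in> S \<Longrightarrow> \<exists>c. br h x = smult c x" using x by (auto simp: JE_def)
    next
      show "subspace {h. \<exists>c. br h x = smult c x}"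
      proof (rule subspaceI)
        show "0 \<in> {h. \<exists>c. br h x = smult c x}" by (auto intro: exI[of _ 0])
      next
        fix c h assume "h \<in> {h. \<exists>c. br h x = smult c x}"
        then obtain d where "br h x = smult d x" by auto
        then show "smult c h \<in> {h. \<exists>c. br h x = smult c x}"
          by (auto simp: br_smultL intro: exI[of _ "c*d"])
      next
        fix h h' assume "h \<in> {h. \<exists>c. br h x = smult c x}"
          "h' \<in> {h. \<exists>c. br h x = smult c x}"
        then obtain d d' where "br h x = smult d x" "br h' x = smult d' x" by auto
        then show "h + h' \<in> {h. \<exists>c. br h x = smult c x}"
          by (auto simp: br_addL scale_left_distrib intro: exI[of _ "d+d'"])
      qed
    qed
    then show "x \<in> JE H" using S by (auto simp: JE_def)
  qed
  then have "span (JE S) \<subseteq> span (JE H)" by (rule span_mono)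
  then show ?thesis using JE_span[OF S(1) SH] by auto
qed

definition wt where "wt x = (\<lambda>h. if h \<in> H then (SOME c. br h x = smult c x) else 0)"

lemma wt_prop:
  assumes x: "x \<in> JE H" "x \<noteq> 0"
  shows "dual_of smult H (wt x)" "x \<in> Gw (wt x)"
proof -
  have w: "h \<in> H \<Longrightarrow> br h x = smult (wt x h) x" for h
    unfolding wt_def using x(1) by (auto simp: JE_def intro: someI_ex)
  show "x \<in> Gw (wt x)" using w by (simp add: Gw_iff)
  show "dual_of smult H (wt x)"
    unfolding dual_of_def
  proof (intro conjI ballI allI impI)
    fix h h' assume h: "h \<in> H" "h' \<in> H"
    have "smult (wt x (h + h')) x = br (h + h') x" using w[OF H_add[OF h]] by simp
    also have "\<dots> = smult (wt x h + wt x h') x" using w h by (simp add: br_addL scale_left_distrib)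
    finally have "smult (wt x (h + h')) x = smult (wt x h + wt x h') x" .
    then show "wt x (h + h') = wt x h + wt x h'" using x(2) by simp
  next
    fix c h assume h: "h \<in> H"
    have "smult (wt x (smult c h)) x = br (smult c h) x" using w[OF H_smult[OF h]] by simp
    also have "\<dots> = smult c (br h x)" by (rule br_smultL)
    also have "\<dots> = smult (c * wt x h) x" using w[OF h] by simp
    finally have "smult (wt x (smult c h)) x = smult (c * wt x h) x" .
    then show "wt x (smult c h) = c * wt x h" using x(2) by simp
  next
    fix h assume "h \<notin> H" then show "wt x h = 0" by (simp add: wt_def)
  qed
qed

definition WS where "WS = {x. \<exists>\<mu>. dual_of smult H \<mu> \<and> x \<in> Gw \<mu>}"

lemma dual_zero: "dual_of smult H (\<lambda>_. 0)" by (simp add: dual_of_def)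

lemma decomp: "span WS = UNIV"
proof -
  have "JE H \<subseteq> WS"
  proof
    fix x assume x: "x \<in> JE H"
    show "x \<in> WS"
    proof (cases "x = 0")
      case True then show ?thesis unfolding WS_def using dual_zero Gw_0 by blast
    next
      case False then show ?thesis unfolding WS_def using wt_prop[OF x] by blast
    qed
  qed
  then show ?thesis using JE_H span_mono by blast
qed

lemma functional_zero:
  assumes add: "\<And>x y. f (x + y) = f x + f y" and sc: "\<And>c x. f (smult c x) = c * f x"
    and z: "\<And>x. x \<in> WS \<Longrightarrow> f x = 0"
  shows "f x = 0"
proof -
  have "x \<in> span WS" using decomp by simp
  then show ?thesis
  proof (rule span_induct)
    show "\<And>x. x \<in> WS \<Longrightarrow> f x = 0" using z by simp
  next
    have f0: "f 0 = 0" using add[of 0 0] by simp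
    show "subspace {x. f x = 0}" unfolding subspace_def using add sc f0 by auto
  qed
qed


section \<open>Nondegeneracy on H and the vectors t_alpha\<close>

lemma dual_agree: "dual_of smult H f \<Longrightarrow> dual_of smult H g \<Longrightarrow> (\<forall>h\<in>H. f h = g h) \<Longrightarrow> f = g"
  unfolding dual_of_def by (intro ext) (case_tac "x \<in> H", auto)

lemma dual_neg: "dual_of smult H f \<Longrightarrow> dual_of smult H (\<lambda>h. - f h)"
  unfolding dual_of_def by auto

lemma dual_add: "dual_of smult H f \<Longrightarrow> dual_of smult H g \<Longrightarrow> dual_of smult H (\<lambda>h. f h + g h)"
  unfolding dual_of_def by (auto simp: algebra_simps)

lemma dual_diff: "dual_of smult H f \<Longrightarrow> dual_of smult H g \<Longrightarrow> dual_of smult H (\<lambda>h. f h - g h)"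
  unfolding dual_of_def by (auto simp: algebra_simps)

lemma dual_scale: "dual_of smult H f \<Longrightarrow> dual_of smult H (\<lambda>h. c * f h)"
  unfolding dual_of_def by (auto simp: algebra_simps)

lemma dual_sum: "(\<And>i. i \<in> A \<Longrightarrow> dual_of smult H (f i)) \<Longrightarrow> dual_of smult H (\<lambda>h. \<Sum>i\<in>A. f i h)"
  unfolding dual_of_def by (auto simp: sum.distrib sum_distrib_left)

lemma H_nondeg: assumes h: "h \<in> H" and z: "\<forall>k\<in>H. B h k = 0" shows "h = 0"
proof -
  have "B h x = 0" for x
  proof (rule functional_zero[where f="B h"])
    show "B h (x + y) = B h x + B h y" for x y by (rule B_addR)
    show "B h (smult c x) = c * B h x" for c x by (rule B_smultR)
    fix y assume "y \<in> WS"
    then obtain \<mu> where mu: "dual_of smult H \<mu>" "y \<in> Gw \<mu>" unfolding WS_def by blast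
    show "B h y = 0"
    proof (cases "\<exists>k\<in>H. \<mu> k \<noteq> 0")
      case True
      then obtain k where k: "k \<in> H" "\<mu> k \<noteq> 0" by blast
      have "h \<in> Gw (\<lambda>_. 0)" using h Gw_zero_eq by simp
      then show ?thesis using Gw_B[OF _ mu(2) k(1)] k(2) by simp
    next
      case False
      then have "y \<in> Gw (\<lambda>_. 0)" using mu(2) by (simp add: Gw_iff)
      then show ?thesis using z Gw_zero_eq by simp
    qed
  qed
  then show ?thesis using B_nondeg by blast
qed

lemma roots_iff: "\<alpha> \<in> roots br smult H \<longleftrightarrow> dual_of smult H \<alpha> \<and> (\<exists>x\<in>Gw \<alpha>. x \<noteq> 0)"
proof -
  have "Gw \<alpha> \<noteq> {0} \<longleftrightarrow> (\<exists>x\<in>Gw \<alpha>. x \<noteq> 0)" using Gw_0[of \<alpha>] by auto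
  then show ?thesis unfolding roots_def by simp
qed

lemma pairing:
  assumes mu: "dual_of smult H \<mu>" and x: "x \<in> Gw \<mu>" "x \<noteq> 0"
  shows "\<exists>y\<in>Gw (\<lambda>h. - \<mu> h). B x y \<noteq> 0"
proof (rule ccontr)
  assume "\<not> ?thesis"
  then have n: "\<And>y. y \<in> Gw (\<lambda>h. - \<mu> h) \<Longrightarrow> B x y = 0" by blast
  have "B x z = 0" for z
  proof (rule functional_zero[where f="B x"])
    show "B x (a + b) = B x a + B x b" for a b by (rule B_addR)
    show "B x (smult c a) = c * B x a" for c a by (rule B_smultR)
    fix y assume "y \<in> WS"
    then obtain \<nu> where nu: "dual_of smult H \<nu>" "y \<in> Gw \<nu>" unfolding WS_def by blast
    show "B x y = 0"
    proof (cases "\<exists>k\<in>H. \<mu> k + \<nu> k \<noteq> 0")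
      case True
      then obtain k where "k \<in> H" "\<mu> k + \<nu> k \<noteq> 0" by blast
      then show ?thesis using Gw_B[OF x(1) nu(2)] by blast
    next
      case False
      then have "\<forall>h\<in>H. \<nu> h = - \<mu> h" by (simp add: eq_neg_iff_add_eq_0 add.commute)
      then have "\<nu> = (\<lambda>h. - \<mu> h)"
        using dual_agree[OF nu(1) dual_neg[OF mu]] by blast
      then show ?thesis using n nu(2) by simp
    qed
  qed
  then show False using B_nondeg x(2) by blast
qed

lemma root_neg: assumes "\<alpha> \<in> roots br smult H" shows "(\<lambda>h. - \<alpha> h) \<in> roots br smult H"
proof -
  from assms obtain x where x: "x \<in> Gw \<alpha>" "x \<noteq> 0" and d: "dual_of smult H \<alpha>"
    by (auto simp: roots_iff)
  obtain y where y: "y \<in> Gw (\<lambda>h. - \<alpha> h)" "B x y \<noteq> 0" using pairing[OF d x] by blast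
  then have "y \<noteq> 0" by auto
  then show ?thesis using y dual_neg[OF d] by (auto simp: roots_iff)
qed

definition rep where "rep f \<longleftrightarrow> (\<exists>t\<in>H. \<forall>h\<in>H. B t h = f h)"

abbreviation tv where "tv f \<equiv> tvec B H f"
abbreviation rf where "rf f g \<equiv> rform B H f g"

lemma tvec_eq: assumes "t \<in> H" "\<forall>h\<in>H. B t h = f h" shows "tv f = t"
  unfolding tvec_def
proof (rule the_equality)
  show "t \<in> H \<and> (\<forall>h\<in>H. B t h = f h)" using assms by blast
  fix t' assume t': "t' \<in> H \<and> (\<forall>h\<in>H. B t' h = f h)"
  have "t' - t = 0"
    by (rule H_nondeg) (use t' assms in \<open>auto simp: H_diff B_diffL\<close>)
  then show "t' = t" by simp
qed

lemma tvec_prop: assumes "rep f" shows "tv f \<in> H" "\<And>h. h \<in> H \<Longrightarrow> B (tv f) h = f h"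
proof -
  obtain t where t: "t \<in> H" "\<forall>h\<in>H. B t h = f h" using assms rep_def by blast
  then have "tv f = t" by (rule tvec_eq)
  then show "tv f \<in> H" "\<And>h. h \<in> H \<Longrightarrow> B (tv f) h = f h" using t by auto
qed

lemma rep_add: assumes "rep f" "rep g" shows "rep (\<lambda>x. f x + g x) \<and> tv (\<lambda>x. f x + g x) = tv f + tv g"
proof -
  have hh: "tv f + tv g \<in> H" "\<forall>h\<in>H. B (tv f + tv g) h = f h + g h"
    using tvec_prop[OF assms(1)] tvec_prop[OF assms(2)] by (auto simp: H_add B_addL)
  then show ?thesis using tvec_eq[OF hh] unfolding rep_def by blast
qed

lemma rep_diff: assumes "rep f" "rep g" shows "rep (\<lambda>x. f x - g x) \<and> tv (\<lambda>x. f x - g x) = tv f - tv g"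
proof -
  have hh: "tv f - tv g \<in> H" "\<forall>h\<in>H. B (tv f - tv g) h = f h - g h"
    using tvec_prop[OF assms(1)] tvec_prop[OF assms(2)] by (auto simp: H_diff B_diffL)
  then show ?thesis using tvec_eq[OF hh] unfolding rep_def by blast
qed

lemma rep_scale: assumes "rep f" shows "rep (\<lambda>x. c * f x) \<and> tv (\<lambda>x. c * f x) = smult c (tv f)"
proof -
  have hh: "smult c (tv f) \<in> H" "\<forall>h\<in>H. B (smult c (tv f)) h = c * f h"
    using tvec_prop[OF assms(1)] by (auto simp: H_smult B_smultL)
  then show ?thesis using tvec_eq[OF hh] unfolding rep_def by blast
qed

lemma rep_neg: assumes "rep f" shows "rep (\<lambda>x. - f x) \<and> tv (\<lambda>x. - f x) = - tv f"
proof -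
  have hh: "- tv f \<in> H" "\<forall>h\<in>H. B (- tv f) h = - f h"
    using tvec_prop[OF assms(1)] by (auto simp: H_neg B_negL)
  then show ?thesis using tvec_eq[OF hh] unfolding rep_def by blast
qed

lemma rep_zero: "rep (\<lambda>x. 0) \<and> tv (\<lambda>x. 0) = 0"
proof -
  have hh: "(0::'g) \<in> H" "\<forall>h\<in>H. B 0 h = 0" using H_0 by auto
  then show ?thesis using tvec_eq[OF hh] unfolding rep_def by blast
qed

lemma rep_sum: "finite A \<Longrightarrow> (\<And>i. i \<in> A \<Longrightarrow> rep (f i)) \<Longrightarrow>
   rep (\<lambda>x. \<Sum>i\<in>A. f i x) \<and> tv (\<lambda>x. \<Sum>i\<in>A. f i x) = (\<Sum>i\<in>A. tv (f i))"
proof (induction A rule: finite_induct)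
  case empty then show ?case using rep_zero by simp
next
  case (insert a A)
  have e: "(\<lambda>x. \<Sum>i\<in>insert a A. f i x) = (\<lambda>x. f a x + (\<Sum>i\<in>A. f i x))"
    using insert.hyps by simp
  show ?case unfolding e using rep_add[of "f a" "\<lambda>x. \<Sum>i\<in>A. f i x"] insert by simp
qed

lemma rep_comb: "finite A \<Longrightarrow> (\<And>i. i \<in> A \<Longrightarrow> rep i) \<Longrightarrow>
   rep (\<lambda>x. \<Sum>i\<in>A. a i * i x) \<and> tv (\<lambda>x. \<Sum>i\<in>A. a i * i x) = (\<Sum>i\<in>A. smult (a i) (tv i))"
  using rep_sum[of A "\<lambda>i x. a i * i x"] rep_scale by (simp cong: sum.cong)

lemma rep_rcomb: "finite A \<Longrightarrow> (\<And>i. i \<in> A \<Longrightarrow> rep i) \<Longrightarrow>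
   rep (rcomb c A) \<and> tv (rcomb c A) = (\<Sum>i\<in>A. smult (of_real (c i)) (tv i))"
  unfolding rcomb_def by (rule rep_comb)

lemma rf_eval: assumes "rep f" "rep g" shows "rf f g = f (tv g)" "rf f g = g (tv f)"
proof -
  have a: "B (tv f) (tv g) = f (tv g)" using tvec_prop[OF assms(1)] tvec_prop(1)[OF assms(2)] by blast
  have b: "B (tv g) (tv f) = g (tv f)" using tvec_prop[OF assms(2)] tvec_prop(1)[OF assms(1)] by blast
  show "rf f g = f (tv g)" unfolding rform_def using a .
  show "rf f g = g (tv f)" unfolding rform_def using b B_sym by metis
qed

lemma rf_sym: "rep f \<Longrightarrow> rep g \<Longrightarrow> rf f g = rf g f"
  unfolding rform_def using B_sym by simp

lemma br_pair: assumes x: "x \<in> Gw \<alpha>" and y: "y \<in> Gw (\<lambda>h. - \<alpha> h)"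
  shows "br x y \<in> H" "h \<in> H \<Longrightarrow> B (br x y) h = \<alpha> h * B x y"
proof -
  have "br x y \<in> Gw (\<lambda>h. \<alpha> h + - \<alpha> h)" by (rule Gw_br[OF x y])
  then show "br x y \<in> H" using Gw_zero_eq by simp
  assume h: "h \<in> H"
  have "B (br x y) h = B x (br y h)" by (rule B_inv)
  also have "\<dots> = - B x (br h y)" by (simp add: br_anti[of y h] B_negR)
  also have "\<dots> = \<alpha> h * B x y" using y h by (simp add: Gw_iff B_smultR B_negR)
  finally show "B (br x y) h = \<alpha> h * B x y" .
qed

lemma root_rep: assumes "\<alpha> \<in> roots br smult H" shows "rep \<alpha>"
proof -
  from assms obtain x where x: "x \<in> Gw \<alpha>" "x \<noteq> 0" and d: "dual_of smult H \<alpha>"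
    by (auto simp: roots_iff)
  obtain y where y: "y \<in> Gw (\<lambda>h. - \<alpha> h)" "B x y \<noteq> 0" using pairing[OF d x] by blast
  show ?thesis unfolding rep_def
    using br_pair[OF x(1) y(1)] y(2) H_smult
    by (intro bexI[of _ "smult (1 / B x y) (br x y)"]) (auto simp: B_smultL)
qed

lemma br_pair_t: assumes a: "\<alpha> \<in> roots br smult H" and x: "x \<in> Gw \<alpha>" and y: "y \<in> Gw (\<lambda>h. - \<alpha> h)"
  shows "br x y = smult (B x y) (tv \<alpha>)"
proof -
  have r: "rep \<alpha>" by (rule root_rep[OF a])
  have "br x y - smult (B x y) (tv \<alpha>) = 0"
  proof (rule H_nondeg)
    show "br x y - smult (B x y) (tv \<alpha>) \<in> H"
      using br_pair(1)[OF x y] tvec_prop(1)[OF r] by (simp add: H_diff H_smult)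
    show "\<forall>k\<in>H. B (br x y - smult (B x y) (tv \<alpha>)) k = 0"
      using br_pair(2)[OF x y] tvec_prop(2)[OF r] by (simp add: B_diffL B_smultL)
  qed
  then show ?thesis by simp
qed

lemma dual_root: "\<alpha> \<in> roots br smult H \<Longrightarrow> dual_of smult H \<alpha>"
  by (simp add: roots_iff)


section \<open>sl2 arguments\<close>

lemma scale_combine: "a + b = c \<Longrightarrow> smult a x + smult b x = smult c x"
  using scale_left_distrib[of a b x] by simp

lemma least_nonzero:
  fixes P :: "nat \<Rightarrow> 'g"
  assumes "P 0 \<noteq> 0" "P N = 0"
  shows "\<exists>n. P n \<noteq> 0 \<and> P (Suc n) = 0"
proof -
  have "N \<noteq> 0" using assms by (cases N) auto
  then obtain M where M: "N = Suc M" by (cases N) auto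
  define n where "n = (LEAST k. P (Suc k) = 0)"
  have PM: "P (Suc M) = 0" using M assms(2) by simp
  have n1: "P (Suc n) = 0" unfolding n_def by (rule LeastI[of "\<lambda>k. P (Suc k) = 0" M, OF PM])
  have "P n \<noteq> 0"
  proof (cases n)
    case 0 then show ?thesis using assms by simp
  next
    case (Suc m)
    have "m < n" using Suc by simp
    then have "P (Suc m) \<noteq> 0" unfolding n_def by (rule not_less_Least[of m "\<lambda>k. P (Suc k) = 0"])
    then show ?thesis using Suc by simp
  qed
  then show ?thesis using n1 by blast
qed

lemma hw:
  assumes hf: "br (br e f) f = smult (-2) f" and fn: "\<forall>y. \<exists>n. (br f ^^ n) y = 0"
    and v: "v \<noteq> 0" "br (br e f) v = smult l v" "br e v = 0"
  shows "\<exists>n::nat. l = of_nat n"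
proof -
  define h where "h = br e f"
  define F where "F j = (br f ^^ j) v" for j
  have FS: "F (Suc j) = br f (F j)" for j by (simp add: F_def)
  have wF: "br h (F j) = smult (l - 2 * of_nat j) (F j)" for j
  proof (induction j)
    case 0 then show ?case using v by (simp add: F_def h_def)
  next
    case (Suc j)
    have "br h (F (Suc j)) = br (br h f) (F j) + br f (br h (F j))"
      unfolding FS by (rule br_deriv)
    also have "\<dots> = smult (-2) (F (Suc j)) + smult (l - 2 * of_nat j) (F (Suc j))"
      using hf Suc unfolding h_def by (simp add: br_smultL br_smultR br_negL FS)
    also have "\<dots> = smult (l - 2 * of_nat (Suc j)) (F (Suc j))"
      by (rule scale_combine) (simp add: field_simps)
    finally show ?case .
  qed
  have eF: "br e (F (Suc j)) = smult (of_nat (Suc j) * (l - of_nat j)) (F j)" for j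
  proof (induction j)
    case 0
    have "br e (F (Suc 0)) = br (br e f) (F 0) + br f (br e (F 0))"
      unfolding FS by (rule br_deriv)
    then show ?case using v by (simp add: F_def)
  next
    case (Suc j)
    have "br e (F (Suc (Suc j))) = br h (F (Suc j)) + br f (br e (F (Suc j)))"
      unfolding FS[of "Suc j"] h_def by (rule br_deriv)
    also have "\<dots> = smult (l - 2 * of_nat (Suc j)) (F (Suc j)) + smult (of_nat (Suc j) * (l - of_nat j)) (F (Suc j))"
      using wF[of "Suc j"] Suc FS[of j] by (simp add: br_smultR)
    also have "\<dots> = smult (of_nat (Suc (Suc j)) * (l - of_nat (Suc j))) (F (Suc j))"
      by (rule scale_combine) (simp add: field_simps)
    finally show ?case .
  qed
  obtain N where "(br f ^^ N) v = 0" using fn by blast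
  then have "F N = 0" by (simp add: F_def)
  moreover have "F 0 \<noteq> 0" using v by (simp add: F_def)
  ultimately obtain n where n: "F n \<noteq> 0" "F (Suc n) = 0" using least_nonzero[of F N] by blast
  have "smult (of_nat (Suc n) * (l - of_nat n)) (F n) = 0" using eF[of n] n(2) by simp
  then have "of_nat (Suc n) * (l - of_nat n) = (0::complex)" using n(1) by simp
  then have "l = of_nat n" by (simp del: of_nat_Suc)
  then show ?thesis by blast
qed

lemma integrality_abs:
  assumes he: "br (br e f) e = smult 2 e" and hf: "br (br e f) f = smult (-2) f"
    and en: "\<forall>y. \<exists>n. (br e ^^ n) y = 0" and fn: "\<forall>y. \<exists>n. (br f ^^ n) y = 0"
    and x: "x \<noteq> 0" "br (br e f) x = smult m x"
  shows "\<exists>k::int. m = of_int k"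
proof -
  define h where "h = br e f"
  define E where "E j = (br e ^^ j) x" for j
  have ES: "E (Suc j) = br e (E j)" for j by (simp add: E_def)
  have wE: "br h (E j) = smult (m + 2 * of_nat j) (E j)" for j
  proof (induction j)
    case 0 then show ?case using x by (simp add: E_def h_def)
  next
    case (Suc j)
    have "br h (E (Suc j)) = br (br h e) (E j) + br e (br h (E j))"
      unfolding ES by (rule br_deriv)
    also have "\<dots> = smult 2 (E (Suc j)) + smult (m + 2 * of_nat j) (E (Suc j))"
      using he Suc unfolding h_def by (simp add: br_smultL br_smultR ES)
    also have "\<dots> = smult (m + 2 * of_nat (Suc j)) (E (Suc j))"
      by (rule scale_combine) (simp add: field_simps)
    finally show ?case .
  qed
  obtain N where "(br e ^^ N) x = 0" using en by blast
  then have "E N = 0" by (simp add: E_def)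
  moreover have "E 0 \<noteq> 0" using x by (simp add: E_def)
  ultimately obtain p where p: "E p \<noteq> 0" "E (Suc p) = 0" using least_nonzero[of E N] by blast
  obtain n::nat where "m + 2 * of_nat p = of_nat n"
    using hw[OF hf fn p(1) wE[of p, unfolded h_def]] p(2) ES by auto
  then have "m = of_int (int n - 2 * int p)" by (simp add: algebra_simps)
  then show ?thesis by blast
qed

lemma lowest_abs:
  assumes he: "br (br e f) e = smult 2 e"
    and en: "\<forall>y. \<exists>n. (br e ^^ n) y = 0"
    and x: "x \<noteq> 0" "br (br e f) x = smult m x" "br f x = 0"
  shows "\<exists>n::nat. m = - of_nat n"
proof -
  have bfe: "br f e = - br e f" by (rule br_anti)
  have he': "br (br f e) e = smult (-2) e" using he by (simp add: bfe br_negL)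
  have x': "br (br f e) x = smult (- m) x" using x by (simp add: bfe br_negL)
  obtain n::nat where "- m = of_nat n" using hw[OF he' en x(1) x' x(3)] by blast
  then have "m = - of_nat n" by (metis minus_minus)
  then show ?thesis by blast
qed

definition niso where "niso = nonisotropic_roots br smult B H"
definition iso where "iso = isotropic_roots br smult B H"
definition RR where "RR = roots br smult H"

lemma RR_rep: "\<alpha> \<in> RR \<Longrightarrow> rep \<alpha>" using root_rep by (simp add: RR_def)
lemma RR_dual: "\<alpha> \<in> RR \<Longrightarrow> dual_of smult H \<alpha>" using dual_root by (simp add: RR_def)
lemma RR_nz: "\<alpha> \<in> RR \<Longrightarrow> \<exists>x\<in>Gw \<alpha>. x \<noteq> 0" by (simp add: RR_def roots_iff)
lemma RR_I: "dual_of smult H \<alpha> \<Longrightarrow> x \<in> Gw \<alpha> \<Longrightarrow> x \<noteq> 0 \<Longrightarrow> \<alpha> \<in> RR"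
  by (auto simp: RR_def roots_iff)

lemma niso_iff: "\<alpha> \<in> niso \<longleftrightarrow> \<alpha> \<in> RR \<and> rf \<alpha> \<alpha> \<noteq> 0"
  by (simp add: niso_def RR_def nonisotropic_roots_def)

lemma iso_iff: "\<alpha> \<in> iso \<longleftrightarrow> \<alpha> \<in> RR \<and> rf \<alpha> \<alpha> = 0"
  by (auto simp: iso_def RR_def isotropic_roots_def nonisotropic_roots_def)

lemma rf_neg: "rep f \<Longrightarrow> rep g \<Longrightarrow> rf (\<lambda>x. - f x) g = - rf f g"
  unfolding rform_def using rep_neg by (simp add: B_negL)

lemma rf_neg2: "rep f \<Longrightarrow> rep g \<Longrightarrow> rf f (\<lambda>x. - g x) = - rf f g"
  unfolding rform_def using rep_neg by (simp add: B_negR)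

lemma niso_neg: assumes a: "\<alpha> \<in> niso" shows "(\<lambda>h. - \<alpha> h) \<in> niso"
proof -
  have aR: "\<alpha> \<in> RR" and n0: "rf \<alpha> \<alpha> \<noteq> 0" using a by (auto simp: niso_iff)
  have r: "rep \<alpha>" using aR root_rep RR_def by blast
  have r': "rep (\<lambda>h. - \<alpha> h)" using rep_neg[OF r] by blast
  have "rf (\<lambda>h. - \<alpha> h) (\<lambda>h. - \<alpha> h) = - rf \<alpha> (\<lambda>h. - \<alpha> h)" by (rule rf_neg[OF r r'])
  also have "\<dots> = rf \<alpha> \<alpha>" using rf_neg2[OF r r] by simp
  finally have "rf (\<lambda>h. - \<alpha> h) (\<lambda>h. - \<alpha> h) \<noteq> 0" using n0 by simp
  moreover have "(\<lambda>h. - \<alpha> h) \<in> RR" using root_neg aR RR_def by blast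
  ultimately show ?thesis by (simp add: niso_iff)
qed

definition ci where "ci \<beta> \<alpha> = 2 * rf \<beta> \<alpha> / rf \<alpha> \<alpha>"

lemma sl2_triple:
  assumes a: "\<alpha> \<in> niso"
  obtains e f where "e \<in> Gw \<alpha>" "f \<in> Gw (\<lambda>h. - \<alpha> h)" "e \<noteq> 0"
    "br e f = smult (2 / rf \<alpha> \<alpha>) (tv \<alpha>)"
    "br (br e f) e = smult 2 e" "br (br e f) f = smult (-2) f"
    "\<forall>y. \<exists>n. (br e ^^ n) y = 0" "\<forall>y. \<exists>n. (br f ^^ n) y = 0"
    "\<And>\<beta> x. \<beta> \<in> RR \<Longrightarrow> x \<in> Gw \<beta> \<Longrightarrow> br (br e f) x = smult (ci \<beta> \<alpha>) x"
proof -
  have aR: "\<alpha> \<in> RR" and n0: "rf \<alpha> \<alpha> \<noteq> 0" using a by (auto simp: niso_iff)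
  have r: "rep \<alpha>" using aR root_rep RR_def by blast
  have d: "dual_of smult H \<alpha>" using aR dual_root RR_def by blast
  obtain e where e: "e \<in> Gw \<alpha>" "e \<noteq> 0" using aR by (auto simp: roots_iff RR_def)
  obtain f0 where f0: "f0 \<in> Gw (\<lambda>h. - \<alpha> h)" "B e f0 \<noteq> 0" using pairing[OF d e] by blast
  define f where "f = smult (2 / (rf \<alpha> \<alpha> * B e f0)) f0"
  have f: "f \<in> Gw (\<lambda>h. - \<alpha> h)" unfolding f_def using f0 Gw_smult by blast
  have Bef: "B e f = 2 / rf \<alpha> \<alpha>" unfolding f_def using f0(2) n0 by (simp add: B_smultR)
  have ef: "br e f = smult (2 / rf \<alpha> \<alpha>) (tv \<alpha>)"
    using br_pair_t[OF aR[unfolded RR_def] e(1) f] Bef by simp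
  have tH: "tv \<alpha> \<in> H" using tvec_prop[OF r] by blast
  have hH: "br e f \<in> H" using ef tH H_smult by simp
  have wt: "\<beta> \<in> RR \<Longrightarrow> x \<in> Gw \<beta> \<Longrightarrow> br (br e f) x = smult (ci \<beta> \<alpha>) x" for \<beta> x
  proof -
    assume b: "\<beta> \<in> RR" "x \<in> Gw \<beta>"
    have rb: "rep \<beta>" using b root_rep RR_def by blast
    have db: "dual_of smult H \<beta>" using b dual_root RR_def by blast
    have "br (br e f) x = smult (\<beta> (br e f)) x" using Gw_H[OF hH b(2)] .
    also have "\<beta> (br e f) = (2 / rf \<alpha> \<alpha>) * \<beta> (tv \<alpha>)" using ef db tH by (simp add: dual_of_def)
    also have "\<beta> (tv \<alpha>) = rf \<alpha> \<beta>" using rf_eval(2)[OF r rb] by simp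
    also have "rf \<alpha> \<beta> = rf \<beta> \<alpha>" using rf_sym[OF r rb] .
    finally show ?thesis by (simp add: ci_def)
  qed
  have cia: "ci \<alpha> \<alpha> = 2" using n0 by (simp add: ci_def)
  have he: "br (br e f) e = smult 2 e" using wt[OF aR e(1)] cia by simp
  have na: "(\<lambda>h. - \<alpha> h) \<in> RR" using root_neg aR RR_def by blast
  have ci_neg: "ci (\<lambda>h. - \<alpha> h) \<alpha> = -2"
    using rf_neg[OF r r] n0 by (simp add: ci_def)
  have hf: "br (br e f) f = smult (-2) f" using wt[OF na f] ci_neg by simp
  have en: "\<forall>y. \<exists>n. (br e ^^ n) y = 0" using GR3 a e(1) by (simp add: niso_def)
  have fn: "\<forall>y. \<exists>n. (br f ^^ n) y = 0" using GR3 niso_neg[OF a] f by (simp add: niso_def)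
  show ?thesis by (rule that[OF e(1) f e(2) ef he hf en fn wt])
qed

lemma ci_int: assumes a: "\<alpha> \<in> niso" and b: "\<beta> \<in> RR" shows "\<exists>k::int. ci \<beta> \<alpha> = of_int k"
proof -
  obtain x where x: "x \<in> Gw \<beta>" "x \<noteq> 0" using b by (auto simp: roots_iff RR_def)
  obtain e f where ef0: "e \<in> Gw \<alpha>" "f \<in> Gw (\<lambda>h. - \<alpha> h)" "e \<noteq> 0"
    "br e f = smult (2 / rf \<alpha> \<alpha>) (tv \<alpha>)"
    "br (br e f) e = smult 2 e" "br (br e f) f = smult (-2) f"
    "\<forall>y. \<exists>n. (br e ^^ n) y = 0" "\<forall>y. \<exists>n. (br f ^^ n) y = 0"
    "\<And>\<beta> x. \<beta> \<in> RR \<Longrightarrow> x \<in> Gw \<beta> \<Longrightarrow> br (br e f) x = smult (ci \<beta> \<alpha>) x"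
    by (rule sl2_triple[OF a]) blast
  note ef = ef0(1,2,5,6,7,8,9)
  show ?thesis using integrality_abs[OF ef(3,4,5,6) x(2) ef(7)[OF b x(1)]] .
qed

lemma root_diff_exists:
  assumes a: "\<alpha> \<in> niso" and b: "\<beta> \<in> RR" and pos: "0 < Re (ci \<beta> \<alpha>)"
  shows "(\<lambda>h. \<beta> h - \<alpha> h) \<in> RR"
proof -
  obtain x where x: "x \<in> Gw \<beta>" "x \<noteq> 0" using b by (auto simp: roots_iff RR_def)
  obtain e f where ef0: "e \<in> Gw \<alpha>" "f \<in> Gw (\<lambda>h. - \<alpha> h)" "e \<noteq> 0"
    "br e f = smult (2 / rf \<alpha> \<alpha>) (tv \<alpha>)"
    "br (br e f) e = smult 2 e" "br (br e f) f = smult (-2) f"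
    "\<forall>y. \<exists>n. (br e ^^ n) y = 0" "\<forall>y. \<exists>n. (br f ^^ n) y = 0"
    "\<And>\<beta> x. \<beta> \<in> RR \<Longrightarrow> x \<in> Gw \<beta> \<Longrightarrow> br (br e f) x = smult (ci \<beta> \<alpha>) x"
    by (rule sl2_triple[OF a]) blast
  note ef = ef0(1,2,5,6,7,8,9)
  have "br f x \<noteq> 0"
  proof
    assume z: "br f x = 0"
    obtain n::nat where "ci \<beta> \<alpha> = - of_nat n"
      using lowest_abs[OF ef(3,5) x(2) ef(7)[OF b x(1)] z] by blast
    then show False using pos by simp
  qed
  moreover have "br f x \<in> Gw (\<lambda>h. \<beta> h - \<alpha> h)"
    using Gw_br[OF ef(2) x(1)] by (simp add: add.commute)
  moreover have "dual_of smult H (\<lambda>h. \<beta> h - \<alpha> h)"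
    using dual_diff[OF RR_dual[OF b] RR_dual] a by (simp add: niso_iff)
  ultimately show ?thesis by (auto simp: roots_iff RR_def)
qed

lemma root_sum_exists:
  assumes a: "\<alpha> \<in> niso" and b: "\<beta> \<in> RR" and neg: "Re (ci \<beta> \<alpha>) < 0"
  shows "(\<lambda>h. \<beta> h + \<alpha> h) \<in> RR"
proof -
  have a': "(\<lambda>h. - \<alpha> h) \<in> niso" by (rule niso_neg[OF a])
  have ra: "rep \<alpha>" "rep \<beta>" using a b root_rep by (auto simp: niso_iff RR_def)
  have "ci \<beta> (\<lambda>h. - \<alpha> h) = - ci \<beta> \<alpha>"
    unfolding ci_def using rf_neg2[OF ra(2) ra(1)] rf_neg[OF ra(1) rep_neg[OF ra(1), THEN conjunct1]]
      rf_neg2[OF ra(1) ra(1)] by (simp add: divide_simps)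
  then have "0 < Re (ci \<beta> (\<lambda>h. - \<alpha> h))" using neg by simp
  from root_diff_exists[OF a' b this] show ?thesis by simp
qed


section \<open>Isotropic roots are orthogonal to everything\<close>


lemma rf_bilin:
  assumes "rep f" "rep g" "rep u"
  shows "rf (\<lambda>x. f x + g x) u = rf f u + rf g u"
    "rf u (\<lambda>x. f x + g x) = rf u f + rf u g"
    "rf (\<lambda>x. c * f x) u = c * rf f u"
    "rf u (\<lambda>x. c * f x) = c * rf u f"
    "rf (\<lambda>x. f x - g x) u = rf f u - rf g u"
    "rf u (\<lambda>x. f x - g x) = rf u f - rf u g"
  unfolding rform_def using assms rep_add rep_scale rep_diff
  by (simp_all add: B_addL B_addR B_smultL B_smultR B_diffL B_diffR)

lemma iso_orth_niso:
  assumes dl: "\<delta> \<in> iso" and al: "\<alpha> \<in> niso"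
  shows "rf \<delta> \<alpha> = 0"
proof (rule ccontr)
  assume dnz: "rf \<delta> \<alpha> \<noteq> 0"
  define d where "d = rf \<delta> \<alpha>"
  define a where "a = rf \<alpha> \<alpha>"
  have dR: "\<delta> \<in> RR" and dd: "rf \<delta> \<delta> = 0" using dl by (auto simp: iso_iff)
  have aR: "\<alpha> \<in> RR" using al by (simp add: niso_iff)
  have rd: "rep \<delta>" and ra: "rep \<alpha>" using dR aR RR_rep by auto
  have dud: "dual_of smult H \<delta>" and dua: "dual_of smult H \<alpha>" using dR aR RR_dual by auto
  have d0: "d \<noteq> 0" using dnz d_def by simp
  define gam where "gam k = (\<lambda>h. \<alpha> h + of_int k * \<delta> h)" for k :: int
  have rg: "rep (gam k)" for k
    unfolding gam_def using rep_add[OF ra rep_scale[OF rd, THEN conjunct1]] by blast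
  have dg: "dual_of smult H (gam k)" for k
    unfolding gam_def by (rule dual_add[OF dua dual_scale[OF dud]])
  have tg: "tv (gam k) = tv \<alpha> + smult (of_int k) (tv \<delta>)" for k
    unfolding gam_def using rep_add[OF ra rep_scale[OF rd, THEN conjunct1]] rep_scale[OF rd] by simp
  have taH: "tv \<alpha> \<in> H" and tdH: "tv \<delta> \<in> H" using tvec_prop ra rd by auto
  have ad: "\<alpha> (tv \<delta>) = d" "\<delta> (tv \<alpha>) = d" "\<alpha> (tv \<alpha>) = a" "\<delta> (tv \<delta>) = 0"
    using rf_eval[OF rd ra] rf_eval[OF ra ra] rf_eval[OF rd rd] rf_eval[OF ra rd] rf_sym[OF ra rd] dd
    by (auto simp: d_def a_def)
  have lin: "\<phi> (u + smult c v) = \<phi> u + c * \<phi> v" if "dual_of smult H \<phi>" "u \<in> H" "v \<in> H" for \<phi> u v c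
    using that H_smult unfolding dual_of_def by simp
  have rdg: "rf \<delta> (gam k) = d" for k
  proof -
    have "rf \<delta> (gam k) = gam k (tv \<delta>)" by (rule rf_eval(2)[OF rd rg])
    also have "\<dots> = d" using ad by (simp add: gam_def)
    finally show ?thesis .
  qed
  have rgg: "rf (gam k) (gam k) = a + 2 * of_int k * d" for k
  proof -
    have "rf (gam k) (gam k) = gam k (tv (gam k))" by (rule rf_eval(1)[OF rg rg])
    also have "\<dots> = \<alpha> (tv \<alpha> + smult (of_int k) (tv \<delta>)) + of_int k * \<delta> (tv \<alpha> + smult (of_int k) (tv \<delta>))"
      by (simp only: tg) (simp add: gam_def)
    also have "\<dots> = a + 2 * of_int k * d"
      using lin[OF dua taH tdH] lin[OF dud taH tdH] ad by (simp add: algebra_simps)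
    finally show ?thesis .
  qed
  define K where "K = (cmod a + 2 * cmod d) / (2 * cmod d)"
  have bound: "gam k \<in> RR \<Longrightarrow> \<bar>real_of_int k\<bar> \<le> K" for k
  proof -
    assume gR: "gam k \<in> RR"
    have cd: "cmod d > 0" using d0 by simp
    define X where "X = a + 2 * of_int k * d"
    have main: "cmod X \<le> 2 * cmod d"
    proof (cases "rf (gam k) (gam k) = 0")
      case True then show ?thesis using rgg[of k] by (simp add: X_def)
    next
      case False
      then have gn: "gam k \<in> niso" using gR by (simp add: niso_iff)
      have X0: "X \<noteq> 0" using False rgg[of k] by (simp add: X_def)
      obtain m::int where m: "ci \<delta> (gam k) = of_int m" using ci_int[OF gn dR] by blast
      have q: "2 * d / X = of_int m" using m rdg[of k] rgg[of k] by (simp add: ci_def X_def)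
      then have eq: "2 * d = of_int m * X" using X0 by (simp add: divide_eq_eq)
      have m0: "m \<noteq> 0" using eq d0 by auto
      have "cmod (2 * d) = cmod (of_int m * X)" using eq by simp
      then have e2: "2 * cmod d = \<bar>real_of_int m\<bar> * cmod X" by (simp add: norm_mult)
      have m1: "\<bar>real_of_int m\<bar> \<ge> 1" using m0 by linarith
      have "1 * cmod X \<le> \<bar>real_of_int m\<bar> * cmod X"
        by (rule mult_right_mono[OF m1 norm_ge_zero])
      then show ?thesis using e2 by simp
    qed
    have "2 * of_int k * d = X - a" by (simp add: X_def)
    then have "cmod (2 * of_int k * d) \<le> cmod X + cmod a"
      using norm_triangle_ineq4[of X a] by simp
    moreover have "cmod (2 * of_int k * d) = 2 * \<bar>real_of_int k\<bar> * cmod d"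
      by (simp add: norm_mult)
    ultimately have "\<bar>real_of_int k\<bar> * (2 * cmod d) \<le> cmod a + 2 * cmod d"
      using main by (simp add: mult.commute mult.left_commute)
    then show "\<bar>real_of_int k\<bar> \<le> K" unfolding K_def using cd
      by (simp add: pos_le_divide_eq)
  qed
  obtain x0 where x0: "x0 \<in> Gw \<delta>" "x0 \<noteq> 0" using RR_nz[OF dR] by blast
  obtain y0 where y0: "y0 \<in> Gw (\<lambda>h. - \<delta> h)" "B x0 y0 \<noteq> 0" using pairing[OF dud x0] by blast
  define x where "x = x0"
  define y where "y = smult (1 / B x0 y0) y0"
  have x: "x \<in> Gw \<delta>" using x0 x_def by simp
  have y: "y \<in> Gw (\<lambda>h. - \<delta> h)" using y0 Gw_smult y_def by simp
  have Bxy: "B x y = 1" using y0 by (simp add: x_def y_def B_smultR)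
  have xy: "br x y = tv \<delta>" using br_pair_t[OF dR[unfolded RR_def] x y] Bxy by simp
  have Zact: "m \<in> Gw (gam k) \<Longrightarrow> br (br x y) m = smult d m" for m k
  proof -
    assume m: "m \<in> Gw (gam k)"
    have "br (br x y) m = smult (gam k (tv \<delta>)) m" using Gw_H[OF tdH m] xy by simp
    moreover have "gam k (tv \<delta>) = rf \<delta> (gam k)" using rf_eval(2)[OF rd rg] by simp
    ultimately show ?thesis using rdg by simp
  qed
  have Xup: "m \<in> Gw (gam k) \<Longrightarrow> br x m \<in> Gw (gam (k + 1))" for m k
  proof -
    assume m: "m \<in> Gw (gam k)"
    have "(\<lambda>h. \<delta> h + gam k h) = gam (k + 1)" unfolding gam_def by (auto simp: algebra_simps)
    then show ?thesis using Gw_br[OF x m] by simp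
  qed
  have Ydown: "m \<in> Gw (gam k) \<Longrightarrow> br y m \<in> Gw (gam (k - 1))" for m k
  proof -
    assume m: "m \<in> Gw (gam k)"
    have "(\<lambda>h. - \<delta> h + gam k h) = gam (k - 1)" unfolding gam_def by (auto simp: algebra_simps)
    then show ?thesis using Gw_br[OF y m] by simp
  qed
  have Xpow: "m \<in> Gw (gam k) \<Longrightarrow> (br x ^^ j) m \<in> Gw (gam (k + int j))" for m k j
  proof (induction j)
    case 0 then show ?case by simp
  next
    case (Suc j)
    then have "br x ((br x ^^ j) m) \<in> Gw (gam (k + int j + 1))" using Xup by blast
    then show ?case by (simp add: add.commute add.left_commute)
  qed
  have comm: "\<And>k m. m \<in> Gw (gam k) \<Longrightarrow>
     (br x ^^ Suc j) (br y m) - br y ((br x ^^ Suc j) m) = smult (of_nat (Suc j) * d) ((br x ^^ j) m)" for j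
  proof (induction j)
    case 0
    have "br x (br y m) = br (br x y) m + br y (br x m)" by (rule br_deriv)
    then show ?case using Zact[OF 0] by simp
  next
    case (Suc j)
    let ?X = "br x ^^ Suc j"
    have IH: "?X (br y m) = br y (?X m) + smult (of_nat (Suc j) * d) ((br x ^^ j) m)"
      using Suc.IH[OF Suc.prems] by (simp add: algebra_simps)
    have inG: "?X m \<in> Gw (gam (k + int (Suc j)))" using Xpow[OF Suc.prems] .
    have "(br x ^^ Suc (Suc j)) (br y m) = br x (?X (br y m))" by simp
    also have "\<dots> = br x (br y (?X m)) + smult (of_nat (Suc j) * d) (br x ((br x ^^ j) m))"
      using IH by (simp add: br_addR br_smultR)
    also have "br x (br y (?X m)) = br (br x y) (?X m) + br y (br x (?X m))" by (rule br_deriv)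
    also have "br (br x y) (?X m) = smult d (?X m)" using Zact[OF inG] .
    also have "br x ((br x ^^ j) m) = ?X m" by simp
    finally have c: "(br x ^^ Suc (Suc j)) (br y m) = smult d (?X m) + br y (br x (?X m)) + smult (of_nat (Suc j) * d) (?X m)" .
    have "(br x ^^ Suc (Suc j)) (br y m) - br y ((br x ^^ Suc (Suc j)) m) = smult d (?X m) + smult (of_nat (Suc j) * d) (?X m)"
    proof -
      have e: "(br x ^^ Suc (Suc j)) m = br x (?X m)" by simp
      show ?thesis by (simp only: c e diff_eq_eq) (simp only: ac_simps)
    qed
    also have "\<dots> = smult (of_nat (Suc (Suc j)) * d) (?X m)"
      by (rule scale_combine) (simp add: field_simps)
    finally show ?case .
  qed
  obtain N::nat where N: "real N > 2 * K" using reals_Archimedean2 by blast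
  have PN: "\<forall>k m. m \<in> Gw (gam k) \<longrightarrow> (br x ^^ N) m = 0"
  proof (intro allI impI)
    fix k m assume m: "m \<in> Gw (gam k)"
    show "(br x ^^ N) m = 0"
    proof (rule ccontr)
      assume nz: "(br x ^^ N) m \<noteq> 0"
      have mnz: "m \<noteq> 0"
      proof
        assume "m = 0"
        have "(br x ^^ j) 0 = 0" for j by (induction j) auto
        then show False using nz \<open>m = 0\<close> by simp
      qed
      have "gam k \<in> RR" using RR_I[OF dg m mnz] .
      then have b1: "\<bar>real_of_int k\<bar> \<le> K" by (rule bound)
      have "gam (k + int N) \<in> RR" using RR_I[OF dg Xpow[OF m] nz] .
      then have b2: "\<bar>real_of_int (k + int N)\<bar> \<le> K" by (rule bound)
      show False using b1 b2 N by linarith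
    qed
  qed
  have down: "\<forall>k m. m \<in> Gw (gam k) \<longrightarrow> (br x ^^ (N - i)) m = 0" for i
  proof (induction i)
    case 0 then show ?case using PN by simp
  next
    case (Suc i)
    show ?case
    proof (cases "N - Suc i = N - i")
      case True then show ?thesis using Suc by simp
    next
      case False
      then have e: "N - i = Suc (N - Suc i)" by simp
      show ?thesis
      proof (intro allI impI)
        fix k m assume m: "m \<in> Gw (gam k)"
        let ?j = "N - Suc i"
        have h1: "(br x ^^ Suc ?j) (br y m) = 0" using Suc Ydown[OF m] e by metis
        have h2: "(br x ^^ Suc ?j) m = 0" using Suc m e by metis
        have "smult (of_nat (Suc ?j) * d) ((br x ^^ ?j) m) = (br x ^^ Suc ?j) (br y m) - br y ((br x ^^ Suc ?j) m)"
          by (rule comm[OF m, symmetric])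
        also have "\<dots> = 0" by (simp only: h1 h2 br_0R diff_zero)
        finally have z: "smult (of_nat (Suc ?j) * d) ((br x ^^ ?j) m) = 0" .
        have "of_nat (Suc ?j) * d \<noteq> 0" using d0 by (simp del: of_nat_Suc)
        then show "(br x ^^ ?j) m = 0" using z by simp
      qed
    qed
  qed
  have "gam 0 = \<alpha>" unfolding gam_def by simp
  obtain e where e: "e \<in> Gw \<alpha>" "e \<noteq> 0" using RR_nz[OF aR] by blast
  have "(br x ^^ (N - N)) e = 0" using down[of N] e \<open>gam 0 = \<alpha>\<close> by metis
  then show False using e by simp
qed


lemma iso_orth_iso:
  assumes dl: "\<delta> \<in> iso" and dl': "\<delta>' \<in> iso"
  shows "rf \<delta> \<delta>' = 0"
proof (rule ccontr)
  assume cnz: "rf \<delta> \<delta>' \<noteq> 0"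
  define c where "c = rf \<delta> \<delta>'"
  have dR: "\<delta> \<in> RR" and dd: "rf \<delta> \<delta> = 0" using dl by (auto simp: iso_iff)
  have dR': "\<delta>' \<in> RR" and dd': "rf \<delta>' \<delta>' = 0" using dl' by (auto simp: iso_iff)
  have rd: "rep \<delta>" "rep \<delta>'" using dR dR' RR_rep by auto
  have dud: "dual_of smult H \<delta>" "dual_of smult H \<delta>'" using dR dR' RR_dual by auto
  have sym: "rf \<delta>' \<delta> = c" using rf_sym[OF rd] c_def by simp
  obtain x0 where x0: "x0 \<in> Gw \<delta>" "x0 \<noteq> 0" using RR_nz[OF dR] by blast
  obtain y0 where y0: "y0 \<in> Gw (\<lambda>h. - \<delta> h)" "B x0 y0 \<noteq> 0" using pairing[OF dud(1) x0] by blast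
  define y where "y = smult (1 / B x0 y0) y0"
  have y: "y \<in> Gw (\<lambda>h. - \<delta> h)" using y0 Gw_smult y_def by simp
  have Bxy: "B x0 y = 1" using y0 by (simp add: y_def B_smultR)
  have xy: "br x0 y = tv \<delta>" using br_pair_t[OF dR[unfolded RR_def] x0(1) y] Bxy by simp
  obtain x' where x': "x' \<in> Gw \<delta>'" "x' \<noteq> 0" using RR_nz[OF dR'] by blast
  have tdH: "tv \<delta> \<in> H" using tvec_prop[OF rd(1)] by blast
  have "br x' (br x0 y) = - smult (\<delta>' (tv \<delta>)) x'"
    using xy Gw_H[OF tdH x'(1)] br_anti[of x' "tv \<delta>"] by simp
  moreover have "\<delta>' (tv \<delta>) = c" using rf_eval(2)[OF rd] c_def by simp
  ultimately have j3: "br x' (br x0 y) = - smult c x'" by simp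
  have "br x0 (br y x') + br y (br x' x0) + br x' (br x0 y) = 0" by (rule jacobi)
  then have "br x0 (br y x') + br y (br x' x0) = smult c x'" using j3
    by (simp add: algebra_simps eq_neg_iff_add_eq_0)
  moreover have "smult c x' \<noteq> 0" using cnz x'(2) c_def by simp
  ultimately have "br y x' \<noteq> 0 \<or> br x' x0 \<noteq> 0" by auto
  then show False
  proof
    assume nz: "br y x' \<noteq> 0"
    have "br y x' \<in> Gw (\<lambda>h. - \<delta> h + \<delta>' h)" by (rule Gw_br[OF y x'(1)])
    moreover have "(\<lambda>h. - \<delta> h + \<delta>' h) = (\<lambda>h. \<delta>' h - \<delta> h)" by (auto simp: algebra_simps)
    ultimately have g: "(\<lambda>h. \<delta>' h - \<delta> h) \<in> RR" using RR_I[OF dual_diff[OF dud(2) dud(1)]] nz by auto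
    have rg: "rep (\<lambda>h. \<delta>' h - \<delta> h)" using rep_diff[OF rd(2) rd(1)] by blast
    have n1: "rf \<delta> (\<lambda>h. \<delta>' h - \<delta> h) = c" using rf_bilin(6)[OF rd(2) rd(1) rd(1)] dd c_def by simp
    have "rf (\<lambda>h. \<delta>' h - \<delta> h) (\<lambda>h. \<delta>' h - \<delta> h) = rf \<delta>' (\<lambda>h. \<delta>' h - \<delta> h) - rf \<delta> (\<lambda>h. \<delta>' h - \<delta> h)"
      by (rule rf_bilin(5)[OF rd(2) rd(1) rg])
    also have "\<dots> = - 2 * c" using rf_bilin(6)[OF rd(2) rd(1) rd(2)] n1 dd' sym by simp
    finally have "(\<lambda>h. \<delta>' h - \<delta> h) \<in> niso" using g cnz c_def by (simp add: niso_iff)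
    then have "rf \<delta> (\<lambda>h. \<delta>' h - \<delta> h) = 0" by (rule iso_orth_niso[OF dl])
    then show False using n1 cnz c_def by simp
  next
    assume nz: "br x' x0 \<noteq> 0"
    have g: "(\<lambda>h. \<delta>' h + \<delta> h) \<in> RR" using RR_I[OF dual_add[OF dud(2) dud(1)] Gw_br[OF x'(1) x0(1)] nz] .
    have rg: "rep (\<lambda>h. \<delta>' h + \<delta> h)" using rep_add[OF rd(2) rd(1)] by blast
    have n1: "rf \<delta> (\<lambda>h. \<delta>' h + \<delta> h) = c" using rf_bilin(2)[OF rd(2) rd(1) rd(1)] dd c_def by simp
    have "rf (\<lambda>h. \<delta>' h + \<delta> h) (\<lambda>h. \<delta>' h + \<delta> h) = rf \<delta>' (\<lambda>h. \<delta>' h + \<delta> h) + rf \<delta> (\<lambda>h. \<delta>' h + \<delta> h)"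
      by (rule rf_bilin(1)[OF rd(2) rd(1) rg])
    also have "\<dots> = 2 * c" using rf_bilin(2)[OF rd(2) rd(1) rd(2)] n1 dd' sym by simp
    finally have "(\<lambda>h. \<delta>' h + \<delta> h) \<in> niso" using g cnz c_def by (simp add: niso_iff)
    then have "rf \<delta> (\<lambda>h. \<delta>' h + \<delta> h) = 0" by (rule iso_orth_niso[OF dl])
    then show False using n1 cnz c_def by simp
  qed
qed

lemma RR_split: "\<gamma> \<in> RR \<Longrightarrow> \<gamma> \<in> iso \<or> \<gamma> \<in> niso"
  by (auto simp: iso_iff niso_iff)

lemma iso_orth: assumes "\<delta> \<in> iso" "\<gamma> \<in> RR" shows "rf \<delta> \<gamma> = 0" "rf \<gamma> \<delta> = 0"
proof -
  show a: "rf \<delta> \<gamma> = 0" using RR_split[OF assms(2)] iso_orth_iso[OF assms(1)] iso_orth_niso[OF assms(1)] by blast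
  have "\<delta> \<in> RR" using assms(1) by (simp add: iso_iff)
  then show "rf \<gamma> \<delta> = 0" using a rf_sym RR_rep assms(2) by metis
qed

end

context grla_ctx begin

abbreviation VS where "VS \<equiv> Vsp br smult H"
abbreviation VZ where "VZ \<equiv> V0 br smult B H"
abbreviation cls where "cls \<equiv> root_classes br smult B H"

lemma VS_iff: "v \<in> VS \<longleftrightarrow> (\<exists>c F. v = rcomb c F \<and> finite F \<and> F \<subseteq> RR)"
  by (auto simp: Vsp_def real_span_def RR_def)

lemma rcomb_rep: assumes "finite F" "F \<subseteq> RR" shows "rep (rcomb c F)"
proof -
  have "\<And>i. i \<in> F \<Longrightarrow> rep i" using assms RR_rep by blast
  then show ?thesis using rep_rcomb[OF assms(1), of c] by blast
qed

lemma rcomb_tv: assumes "finite F" "F \<subseteq> RR" shows "tv (rcomb c F) = (\<Sum>i\<in>F. smult (of_real (c i)) (tv i))"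
proof -
  have "\<And>i. i \<in> F \<Longrightarrow> rep i" using assms RR_rep by blast
  then show ?thesis using rep_rcomb[OF assms(1), of c] by blast
qed

lemma VS_rep: assumes "v \<in> VS" shows "rep v"
proof -
  obtain c F where "v = rcomb c F" "finite F" "F \<subseteq> RR" using assms VS_iff by blast
  then show ?thesis using rcomb_rep by simp
qed

lemma rcomb_rf_left:
  assumes "finite F" "F \<subseteq> RR" "rep u"
  shows "rf (rcomb c F) u = (\<Sum>\<beta>\<in>F. of_real (c \<beta>) * rf \<beta> u)"
proof -
  have "rf (rcomb c F) u = rcomb c F (tv u)" using rf_eval(1)[OF rcomb_rep[OF assms(1,2)] assms(3)] .
  also have "\<dots> = (\<Sum>\<beta>\<in>F. of_real (c \<beta>) * rf \<beta> u)"
    unfolding rcomb_def using assms rf_eval(1)[OF RR_rep assms(3)] by (intro sum.cong) auto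
  finally show ?thesis .
qed

lemma rcomb_rf_right:
  assumes "finite F" "F \<subseteq> RR" "rep u"
  shows "rf u (rcomb c F) = (\<Sum>\<beta>\<in>F. of_real (c \<beta>) * rf u \<beta>)"
proof -
  have "rf u (rcomb c F) = rcomb c F (tv u)" using rf_eval(2)[OF assms(3) rcomb_rep[OF assms(1,2)]] .
  also have "\<dots> = (\<Sum>\<beta>\<in>F. of_real (c \<beta>) * rf u \<beta>)"
    unfolding rcomb_def using assms rf_eval(2)[OF assms(3) RR_rep] by (intro sum.cong) auto
  finally show ?thesis .
qed

lemma VZ_iff: "v \<in> VZ \<longleftrightarrow> v \<in> VS \<and> (\<forall>w\<in>VS. rf v w = 0)"
  by (simp add: V0_def)

lemma VZ_roots: assumes v: "v \<in> VS" and o: "\<And>\<gamma>. \<gamma> \<in> RR \<Longrightarrow> rf v \<gamma> = 0" shows "v \<in> VZ"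
proof -
  have "rf v w = 0" if w: "w \<in> VS" for w
  proof -
    obtain c F where w': "w = rcomb c F" "finite F" "F \<subseteq> RR" using w VS_iff by blast
    have "rf v w = (\<Sum>\<beta>\<in>F. of_real (c \<beta>) * rf v \<beta>)"
      unfolding w'(1) by (rule rcomb_rf_right[OF w'(2,3) VS_rep[OF v]])
    also have "\<dots> = 0" using o w'(3) by (intro sum.neutral) auto
    finally show ?thesis .
  qed
  then show ?thesis using v VZ_iff by blast
qed

lemma rcomb_single: "rcomb (\<lambda>_. 1) {\<beta>} = \<beta>"
  by (simp add: rcomb_def)

lemma RR_VS: assumes "\<beta> \<in> RR" shows "\<beta> \<in> VS"
proof -
  have "\<beta> = rcomb (\<lambda>_. 1) {\<beta>}" by (rule rcomb_single[symmetric])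
  then have "\<beta> = rcomb (\<lambda>_. 1) {\<beta>} \<and> finite {\<beta>} \<and> {\<beta>} \<subseteq> RR" using assms by simp
  then show ?thesis unfolding VS_iff by blast
qed

lemma iso_VZ: assumes d: "\<delta> \<in> iso" shows "\<delta> \<in> VZ"
proof (rule VZ_roots)
  show "\<delta> \<in> VS" using d RR_VS by (simp add: iso_iff)
  show "\<And>\<gamma>. \<gamma> \<in> RR \<Longrightarrow> rf \<delta> \<gamma> = 0" using iso_orth(1)[OF d] by blast
qed

lemma rcomb_neg: "rcomb (\<lambda>\<beta>. - c \<beta>) F = (\<lambda>x. - rcomb c F x)"
  unfolding rcomb_def by (rule ext) (simp add: sum_negf)

lemma VS_neg: assumes "v \<in> VS" shows "(\<lambda>x. - v x) \<in> VS"
proof -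
  obtain c F where "v = rcomb c F" "finite F" "F \<subseteq> RR" using assms VS_iff by blast
  moreover have "(\<lambda>x. - rcomb c F x) = rcomb (\<lambda>\<beta>. - c \<beta>) F" by (rule rcomb_neg[symmetric])
  ultimately have "(\<lambda>x. - v x) = rcomb (\<lambda>\<beta>. - c \<beta>) F \<and> finite F \<and> F \<subseteq> RR" by simp
  then show ?thesis unfolding VS_iff by blast
qed

lemma VZ_neg: assumes "v \<in> VZ" shows "(\<lambda>x. - v x) \<in> VZ"
proof -
  have v: "v \<in> VS" "\<And>w. w \<in> VS \<Longrightarrow> rf v w = 0" using assms VZ_iff by auto
  have "rf (\<lambda>x. - v x) w = 0" if "w \<in> VS" for w
    using rf_neg[OF VS_rep[OF v(1)] VS_rep[OF that]] v(2)[OF that] by simp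
  then show ?thesis using VS_neg[OF v(1)] VZ_iff by blast
qed

lemma VZ_sym: assumes "v \<in> VZ" "w \<in> VS" shows "rf w v = 0"
proof -
  have v: "v \<in> VS" "rf v w = 0" using assms VZ_iff by auto
  then show ?thesis using rf_sym[OF VS_rep[OF v(1)] VS_rep[OF assms(2)]] by simp
qed

definition Erel where "Erel = (root_rel br smult B H \<union> (root_rel br smult B H)\<inverse>)\<^sup>+ \<union> Id_on niso"

lemma cls_eq: "cls = niso // Erel"
  by (simp add: root_classes_def Erel_def niso_def)

lemma root_rel_iff: "(a, b) \<in> root_rel br smult B H \<longleftrightarrow> a \<in> niso \<and> b \<in> niso \<and> rf a b \<noteq> 0"
  by (simp add: root_rel_def niso_def)

lemma niso_rep: "a \<in> niso \<Longrightarrow> rep a" using RR_rep niso_iff by blast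

lemma rr_sym_iff: "(a, b) \<in> root_rel br smult B H \<union> (root_rel br smult B H)\<inverse> \<longleftrightarrow> a \<in> niso \<and> b \<in> niso \<and> rf a b \<noteq> 0"
  using root_rel_iff rf_sym niso_rep by auto

lemma Erel_sub: "Erel \<subseteq> niso \<times> niso"
proof -
  have "root_rel br smult B H \<union> (root_rel br smult B H)\<inverse> \<subseteq> niso \<times> niso"
    using rr_sym_iff by auto
  then have "(root_rel br smult B H \<union> (root_rel br smult B H)\<inverse>)\<^sup>+ \<subseteq> niso \<times> niso"
    by (rule trancl_subset_Sigma)
  moreover have "Id_on niso \<subseteq> niso \<times> niso" by (rule Id_on_subset_Times)
  ultimately show ?thesis unfolding Erel_def by (rule Un_least)
qed

lemma Erel_equiv: "equiv niso Erel"
proof (rule equivI)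
  show "refl_on niso Erel" unfolding refl_on_def using Erel_sub by (auto simp: Erel_def)
  have s: "sym (root_rel br smult B H \<union> (root_rel br smult B H)\<inverse>)" by (auto simp: sym_def)
  show "sym Erel" unfolding Erel_def using sym_trancl[OF s]
    by (auto simp: sym_def)
  show "trans Erel" unfolding Erel_def trans_def
    by (auto intro: trancl_trans)
qed (rule Erel_sub)?

lemma cls_sub: assumes "C \<in> cls" shows "C \<subseteq> niso"
proof -
  have C': "C \<in> niso // Erel" using assms cls_eq by simp
  show ?thesis by (rule in_quotient_imp_subset[OF Erel_equiv C'])
qed

lemma cls_closed:
  assumes C: "C \<in> cls" and a: "\<alpha> \<in> C" and g: "\<gamma> \<in> niso" and nz: "rf \<alpha> \<gamma> \<noteq> 0"
  shows "\<gamma> \<in> C"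
proof -
  have an: "\<alpha> \<in> niso" using cls_sub C a by blast
  have "(\<alpha>, \<gamma>) \<in> root_rel br smult B H \<union> (root_rel br smult B H)\<inverse>"
    using rr_sym_iff an g nz by simp
  then have "(\<alpha>, \<gamma>) \<in> (root_rel br smult B H \<union> (root_rel br smult B H)\<inverse>)\<^sup>+" by (rule r_into_trancl)
  then have "(\<alpha>, \<gamma>) \<in> Erel" unfolding Erel_def by (rule UnI1)
  moreover have C': "C \<in> niso // Erel" using C cls_eq by simp
  ultimately show ?thesis using in_quotient_imp_closed[OF Erel_equiv C' a] by blast
qed

lemma cls_orth:
  assumes C: "C \<in> cls" and a: "\<alpha> \<in> C" and g: "\<gamma> \<in> niso" "\<gamma> \<notin> C"
  shows "rf \<alpha> \<gamma> = 0"
  using cls_closed[OF C a g(1)] g(2) by blast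

lemma cls_disj_orth:
  assumes C: "C \<in> cls" and D: "D \<in> cls" and CD: "C \<noteq> D" and a: "\<alpha> \<in> C" and g: "\<gamma> \<in> D"
  shows "rf \<alpha> \<gamma> = 0"
proof -
  have "C = D \<or> C \<inter> D = {}" using quotient_disj[OF Erel_equiv] C D cls_eq by simp
  then have "C \<inter> D = {}" using CD by simp
  then have "\<gamma> \<notin> C" using g by blast
  moreover have "\<gamma> \<in> niso" using cls_sub D g by blast
  ultimately show ?thesis using cls_orth[OF C a] by blast
qed

lemma adj_ratio:
  assumes y: "y \<in> niso" and z: "z \<in> niso" and nz: "rf y z \<noteq> 0"
  shows "\<exists>q::real. rf z z = of_real q * rf y y"
proof -
  have ry: "rep y" and rz: "rep z" using y z niso_rep by auto
  have yR: "y \<in> RR" and zR: "z \<in> RR" and y0: "rf y y \<noteq> 0" and z0: "rf z z \<noteq> 0"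
    using y z by (auto simp: niso_iff)
  obtain k1::int where k1: "ci z y = of_int k1" using ci_int[OF y zR] by blast
  obtain k2::int where k2: "ci y z = of_int k2" using ci_int[OF z yR] by blast
  have s: "rf z y = rf y z" using rf_sym[OF rz ry] .
  have e1: "2 * rf y z = of_int k1 * rf y y" using k1 s y0 by (simp add: ci_def divide_eq_eq)
  have e2: "2 * rf y z = of_int k2 * rf z z" using k2 z0 by (simp add: ci_def divide_eq_eq)
  have k2nz: "k2 \<noteq> 0" using e2 nz by auto
  have "rf z z = of_real (real_of_int k1 / real_of_int k2) * rf y y"
    using e1 e2 k2nz by (simp add: field_simps)
  then show ?thesis by blast
qed

lemma cls_ratio:
  assumes C: "C \<in> cls" and a: "\<alpha> \<in> C" and g: "\<gamma> \<in> C"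
  shows "\<exists>q::real. rf \<gamma> \<gamma> = of_real q * rf \<alpha> \<alpha>"
proof -
  have "(\<alpha>, \<gamma>) \<in> Erel" using quotient_eq_iff[OF Erel_equiv, of C C \<alpha> \<gamma>] C a g cls_eq by simp
  then consider "\<alpha> = \<gamma>" | "(\<alpha>, \<gamma>) \<in> (root_rel br smult B H \<union> (root_rel br smult B H)\<inverse>)\<^sup>+"
    unfolding Erel_def by auto
  then show ?thesis
  proof cases
    case 1 then show ?thesis by (intro exI[of _ 1]) simp
  next
    case 2
    then show ?thesis
    proof (induction rule: trancl_induct)
      case (base y)
      then show ?case using adj_ratio rr_sym_iff by blast
    next
      case (step y z)
      obtain q1 where q1: "rf y y = of_real q1 * rf \<alpha> \<alpha>" using step.IH by blast
      obtain q2 where q2: "rf z z = of_real q2 * rf y y" using adj_ratio step.hyps(2) rr_sym_iff by blast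
      have "rf z z = of_real (q2 * q1) * rf \<alpha> \<alpha>" using q1 q2 by simp
      then show ?case by blast
    qed
  qed
qed

lemma cls_gram:
  assumes C: "C \<in> cls" and a: "a \<in> C" and b: "\<beta> \<in> C" and g: "\<gamma> \<in> C"
  shows "\<exists>r::real. rf \<beta> \<gamma> = of_real r * rf a a"
proof -
  have bn: "\<beta> \<in> niso" and gn: "\<gamma> \<in> niso" using cls_sub C b g by auto
  have gR: "\<gamma> \<in> RR" and b0: "rf \<beta> \<beta> \<noteq> 0" using gn bn by (auto simp: niso_iff)
  obtain q where q: "rf \<beta> \<beta> = of_real q * rf a a" using cls_ratio[OF C a b] by blast
  obtain k::int where k: "ci \<gamma> \<beta> = of_int k" using ci_int[OF bn gR] by blast
  have s: "rf \<gamma> \<beta> = rf \<beta> \<gamma>" using rf_sym niso_rep bn gn by blast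
  have "2 * rf \<beta> \<gamma> = of_int k * rf \<beta> \<beta>" using k s b0 by (simp add: ci_def divide_eq_eq)
  then have "rf \<beta> \<gamma> = of_real (real_of_int k * q / 2) * rf a a" using q by (simp add: field_simps)
  then show ?thesis by blast
qed


abbreviation bp where "bp C Bs \<equiv> base_preimage br smult B H C Bs"

lemma bp_fin: "bp C Bs \<Longrightarrow> finite Bs" by (simp add: base_preimage_def)
lemma bp_sub: "bp C Bs \<Longrightarrow> Bs \<subseteq> C" by (simp add: base_preimage_def)
lemma bp_indep: "bp C Bs \<Longrightarrow> rcomb c Bs \<in> VZ \<Longrightarrow> \<beta> \<in> Bs \<Longrightarrow> c \<beta> = 0"
  by (simp add: base_preimage_def)
lemma bp_expr: "bp C Bs \<Longrightarrow> \<alpha> \<in> C \<Longrightarrow> \<exists>n. ((\<forall>\<beta>\<in>Bs. n \<beta> \<ge> 0) \<or> (\<forall>\<beta>\<in>Bs. n \<beta> \<le> 0)) \<and>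
        (\<lambda>x. \<alpha> x - rcomb (\<lambda>\<beta>. real_of_int (n \<beta>)) Bs x) \<in> VZ"
  unfolding base_preimage_def by blast

lemma cls_RR: "C \<in> cls \<Longrightarrow> C \<subseteq> RR" using cls_sub niso_iff by blast

lemma bp_RR: "C \<in> cls \<Longrightarrow> bp C Bs \<Longrightarrow> Bs \<subseteq> RR" using cls_RR bp_sub by blast

lemma rcomb_empty: "rcomb c {} = (\<lambda>x. 0)" by (simp add: rcomb_def)

lemma zero_VZ: "(\<lambda>x. 0) \<in> VZ"
proof -
  have "(\<lambda>x. 0) = rcomb (\<lambda>_. 0) {}" by (rule rcomb_empty[symmetric])
  then have "(\<lambda>x. 0) = rcomb (\<lambda>_. 0) {} \<and> finite {} \<and> {} \<subseteq> RR" by simp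
  then have z: "(\<lambda>x. 0) \<in> VS" unfolding VS_iff by blast
  have "rf (\<lambda>x. 0) w = 0" for w unfolding rform_def using rep_zero by simp
  then show ?thesis using z VZ_iff by blast
qed

lemma Rdot_sub: assumes C: "C \<in> cls" and bp: "bp C Bs" shows "Bs \<subseteq> Rdot br smult B H C Bs"
proof
  fix \<beta> assume b: "\<beta> \<in> Bs"
  have "\<beta> = rcomb (\<lambda>_. 1) {\<beta>}" by (rule rcomb_single[symmetric])
  then have "\<beta> \<in> real_span Bs" unfolding real_span_def using b by blast
  moreover have "\<beta> \<in> C" using b bp_sub[OF bp] by blast
  moreover have "(\<lambda>x. \<beta> x - \<beta> x) \<in> VZ" using zero_VZ by simp
  ultimately show "\<beta> \<in> Rdot br smult B H C Bs" unfolding Rdot_def by blast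
qed

lemma rcomb_span: assumes "finite F" "F \<subseteq> RR" shows "tv (rcomb c F) \<in> span (tv ` F)"
  using rcomb_tv[OF assms] by (simp add: span_sum span_scale span_base)

lemma Hdot_eq: assumes C: "C \<in> cls" and bp: "bp C Bs" shows "Hdot br smult B H C Bs = span (tv ` Bs)"
proof
  show "span (tv ` Bs) \<subseteq> Hdot br smult B H C Bs"
    unfolding Hdot_def using Rdot_sub[OF C bp] by (intro span_mono) blast
  show "Hdot br smult B H C Bs \<subseteq> span (tv ` Bs)"
    unfolding Hdot_def
  proof (rule span_minimal)
    show "tv ` Rdot br smult B H C Bs \<subseteq> span (tv ` Bs)"
    proof
      fix t assume "t \<in> tv ` Rdot br smult B H C Bs"
      then obtain r where r: "r \<in> Rdot br smult B H C Bs" "t = tv r" by blast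
      then obtain c F where cF: "r = rcomb c F" "finite F" "F \<subseteq> Bs"
        unfolding Rdot_def real_span_def by blast
      have "F \<subseteq> RR" using cF bp_RR[OF C bp] by blast
      then have "tv r \<in> span (tv ` F)" using rcomb_span cF by simp
      moreover have "span (tv ` F) \<subseteq> span (tv ` Bs)" using cF by (intro span_mono) blast
      ultimately show "t \<in> span (tv ` Bs)" using r by blast
    qed
  qed simp
qed

lemma span_repr: assumes "finite S" "x \<in> span (g ` S)" shows "\<exists>c. x = (\<Sum>\<beta>\<in>S. smult (c \<beta>) (g \<beta>))"
proof (rule span_induct[OF assms(2)])
  show "\<And>y. y \<in> g ` S \<Longrightarrow> \<exists>c. y = (\<Sum>\<beta>\<in>S. smult (c \<beta>) (g \<beta>))"
  proof -
    fix y assume "y \<in> g ` S"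
    then obtain b where b: "b \<in> S" "y = g b" by blast
    have "(\<Sum>\<beta>\<in>S. smult (if \<beta> = b then 1 else 0) (g \<beta>)) = g b"
      using assms(1) b(1) by (simp add: if_distrib[of "\<lambda>c. smult c _"] sum.delta cong: if_cong)
    then show "\<exists>c. y = (\<Sum>\<beta>\<in>S. smult (c \<beta>) (g \<beta>))" using b by metis
  qed
  show "subspace {x. \<exists>c. x = (\<Sum>\<beta>\<in>S. smult (c \<beta>) (g \<beta>))}"
  proof (rule subspaceI)
    show "0 \<in> {x. \<exists>c. x = (\<Sum>\<beta>\<in>S. smult (c \<beta>) (g \<beta>))}"
      by (auto intro!: exI[of _ "\<lambda>_. 0"])
  next
    fix x y assume "x \<in> {x. \<exists>c. x = (\<Sum>\<beta>\<in>S. smult (c \<beta>) (g \<beta>))}" "y \<in> {x. \<exists>c. x = (\<Sum>\<beta>\<in>S. smult (c \<beta>) (g \<beta>))}"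
    then obtain c d where cd: "x = (\<Sum>\<beta>\<in>S. smult (c \<beta>) (g \<beta>))" "y = (\<Sum>\<beta>\<in>S. smult (d \<beta>) (g \<beta>))" by blast
    then have "x + y = (\<Sum>\<beta>\<in>S. smult (c \<beta> + d \<beta>) (g \<beta>))"
      by (simp add: sum.distrib scale_left_distrib)
    then show "x + y \<in> {x. \<exists>c. x = (\<Sum>\<beta>\<in>S. smult (c \<beta>) (g \<beta>))}"
      unfolding mem_Collect_eq by (rule exI[of _ "\<lambda>\<beta>. c \<beta> + d \<beta>"])
  next
    fix a x assume "x \<in> {x. \<exists>c. x = (\<Sum>\<beta>\<in>S. smult (c \<beta>) (g \<beta>))}"
    then obtain c where c: "x = (\<Sum>\<beta>\<in>S. smult (c \<beta>) (g \<beta>))" by blast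
    then have "smult a x = (\<Sum>\<beta>\<in>S. smult (a * c \<beta>) (g \<beta>))"
      by (simp add: scale_sum_right)
    then show "smult a x \<in> {x. \<exists>c. x = (\<Sum>\<beta>\<in>S. smult (c \<beta>) (g \<beta>))}"
      unfolding mem_Collect_eq by (rule exI[of _ "\<lambda>\<beta>. a * c \<beta>"])
  qed
qed

lemma indep_gram:
  assumes C: "C \<in> cls" and bp: "bp C Bs"
    and h: "\<And>\<gamma>. \<gamma> \<in> Bs \<Longrightarrow> (\<Sum>\<beta>\<in>Bs. of_real (r \<beta>) * rf \<beta> \<gamma>) = 0"
  shows "\<forall>\<beta>\<in>Bs. r \<beta> = 0"
proof -
  have fin: "finite Bs" and BR: "Bs \<subseteq> RR" and BC: "Bs \<subseteq> C" using bp_fin[OF bp] bp_RR[OF C bp] bp_sub[OF bp] by auto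
  define v where "v = rcomb r Bs"
  have vS: "v \<in> VS" unfolding v_def VS_iff using fin BR by blast
  have rv: "rep v" using VS_rep[OF vS] .
  have vg: "rf v \<gamma> = (\<Sum>\<beta>\<in>Bs. of_real (r \<beta>) * rf \<beta> \<gamma>)" if "\<gamma> \<in> RR" for \<gamma>
    unfolding v_def by (rule rcomb_rf_left[OF fin BR RR_rep[OF that]])
  have vB: "rf v \<gamma> = 0" if "\<gamma> \<in> Bs" for \<gamma>
  proof -
    have g: "\<gamma> \<in> RR" using that BR by blast
    show ?thesis using vg[OF g] h[OF that] by simp
  qed
  have "v \<in> VZ"
  proof (rule VZ_roots[OF vS])
    fix \<gamma> assume g: "\<gamma> \<in> RR"
    consider "\<gamma> \<in> iso" | "\<gamma> \<in> niso" "\<gamma> \<notin> C" | "\<gamma> \<in> C" using RR_split[OF g] by blast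
    then show "rf v \<gamma> = 0"
    proof cases
      case 1
      have "\<And>\<beta>. \<beta> \<in> Bs \<Longrightarrow> rf \<beta> \<gamma> = 0" using iso_orth(2)[OF 1] BR by blast
      then show ?thesis using vg[OF g] by simp
    next
      case 2
      have "\<And>\<beta>. \<beta> \<in> Bs \<Longrightarrow> rf \<beta> \<gamma> = 0" using cls_orth[OF C _ 2] BC by blast
      then show ?thesis using vg[OF g] by simp
    next
      case 3
      obtain n where n: "(\<lambda>x. \<gamma> x - rcomb (\<lambda>\<beta>. real_of_int (n \<beta>)) Bs x) \<in> VZ"
        using bp_expr[OF bp 3] by blast
      define R where "R = rcomb (\<lambda>\<beta>. real_of_int (n \<beta>)) Bs"
      have rR: "rep R" unfolding R_def using rcomb_rep[OF fin BR] .
      have "rf v (\<lambda>x. \<gamma> x - R x) = 0" using VZ_sym[OF n[folded R_def] vS] .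
      then have "rf v \<gamma> = rf v R" using rf_bilin(6)[OF RR_rep[OF g] rR rv] by simp
      also have "\<dots> = (\<Sum>\<beta>\<in>Bs. of_real (real_of_int (n \<beta>)) * rf v \<beta>)"
        unfolding R_def by (rule rcomb_rf_right[OF fin BR rv])
      also have "\<dots> = 0" using vB by simp
      finally show ?thesis .
    qed
  qed
  then show ?thesis using bp_indep[OF bp] unfolding v_def by blast
qed

lemma Hdot_nondeg:
  assumes C: "C \<in> cls" and bp: "bp C Bs"
    and x: "x \<in> Hdot br smult B H C Bs" and o: "\<forall>y\<in>Hdot br smult B H C Bs. B x y = 0"
  shows "x = 0"
proof -
  have fin: "finite Bs" and BR: "Bs \<subseteq> RR" and BC: "Bs \<subseteq> C" using bp_fin[OF bp] bp_RR[OF C bp] bp_sub[OF bp] by auto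
  have HE: "Hdot br smult B H C Bs = span (tv ` Bs)" by (rule Hdot_eq[OF C bp])
  obtain c where c: "x = (\<Sum>\<beta>\<in>Bs. smult (c \<beta>) (tv \<beta>))" using span_repr[OF fin] x HE by blast
  show ?thesis
  proof (cases "Bs = {}")
    case True then show ?thesis using c by simp
  next
    case False
    then obtain a where a: "a \<in> Bs" by blast
    have aC: "a \<in> C" using a BC by blast
    define s where "s = rf a a"
    have s0: "s \<noteq> 0" using aC cls_sub[OF C] by (auto simp: s_def niso_iff)
    define M where "M \<beta> \<gamma> = (SOME r::real. rf \<beta> \<gamma> = of_real r * s)" for \<beta> \<gamma>
    have M: "rf \<beta> \<gamma> = of_real (M \<beta> \<gamma>) * s" if "\<beta> \<in> Bs" "\<gamma> \<in> Bs" for \<beta> \<gamma>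
    proof -
      have "\<exists>r::real. rf \<beta> \<gamma> = of_real r * s" using cls_gram[OF C aC] that BC s_def by blast
      then show ?thesis unfolding M_def by (rule someI_ex)
    qed
    have eq0: "(\<Sum>\<beta>\<in>Bs. c \<beta> * of_real (M \<beta> \<gamma>)) = 0" if g: "\<gamma> \<in> Bs" for \<gamma>
    proof -
      have tg: "tv \<gamma> \<in> Hdot br smult B H C Bs" using HE g span_base by blast
      have "0 = B x (tv \<gamma>)" using o tg by simp
      also have "\<dots> = (\<Sum>\<beta>\<in>Bs. c \<beta> * rf \<beta> \<gamma>)"
        unfolding c by (simp add: B_sumL B_smultL rform_def)
      also have "\<dots> = (\<Sum>\<beta>\<in>Bs. c \<beta> * of_real (M \<beta> \<gamma>)) * s"
        using M g by (simp add: sum_distrib_right mult.assoc)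
      finally show ?thesis using s0 by simp
    qed
    have re: "\<forall>\<beta>\<in>Bs. (\<lambda>\<beta>. Re (c \<beta>)) \<beta> = 0"
    proof (rule indep_gram[OF C bp])
      fix \<gamma> assume g: "\<gamma> \<in> Bs"
      have "(\<Sum>\<beta>\<in>Bs. Re (c \<beta>) * M \<beta> \<gamma>) = Re (\<Sum>\<beta>\<in>Bs. c \<beta> * of_real (M \<beta> \<gamma>))"
        by (simp add: Re_sum)
      also have "\<dots> = 0" using eq0[OF g] by simp
      finally have z: "(\<Sum>\<beta>\<in>Bs. Re (c \<beta>) * M \<beta> \<gamma>) = 0" .
      have "(\<Sum>\<beta>\<in>Bs. of_real (Re (c \<beta>)) * rf \<beta> \<gamma>) = (\<Sum>\<beta>\<in>Bs. of_real (Re (c \<beta>) * M \<beta> \<gamma>) * s)"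
        using M g by (intro sum.cong) (simp_all add: mult.assoc)
      also have "\<dots> = of_real (\<Sum>\<beta>\<in>Bs. Re (c \<beta>) * M \<beta> \<gamma>) * s"
        by (simp add: sum_distrib_right)
      finally show "(\<Sum>\<beta>\<in>Bs. of_real (Re (c \<beta>)) * rf \<beta> \<gamma>) = 0" using z by simp
    qed
    have im: "\<forall>\<beta>\<in>Bs. (\<lambda>\<beta>. Im (c \<beta>)) \<beta> = 0"
    proof (rule indep_gram[OF C bp])
      fix \<gamma> assume g: "\<gamma> \<in> Bs"
      have "(\<Sum>\<beta>\<in>Bs. Im (c \<beta>) * M \<beta> \<gamma>) = Im (\<Sum>\<beta>\<in>Bs. c \<beta> * of_real (M \<beta> \<gamma>))"
        by (simp add: Im_sum)
      also have "\<dots> = 0" using eq0[OF g] by simp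
      finally have z: "(\<Sum>\<beta>\<in>Bs. Im (c \<beta>) * M \<beta> \<gamma>) = 0" .
      have "(\<Sum>\<beta>\<in>Bs. of_real (Im (c \<beta>)) * rf \<beta> \<gamma>) = (\<Sum>\<beta>\<in>Bs. of_real (Im (c \<beta>) * M \<beta> \<gamma>) * s)"
        using M g by (intro sum.cong) (simp_all add: mult.assoc)
      also have "\<dots> = of_real (\<Sum>\<beta>\<in>Bs. Im (c \<beta>) * M \<beta> \<gamma>) * s"
        by (simp add: sum_distrib_right)
      finally show "(\<Sum>\<beta>\<in>Bs. of_real (Im (c \<beta>)) * rf \<beta> \<gamma>) = 0" using z by simp
    qed
    have "\<forall>\<beta>\<in>Bs. c \<beta> = 0" using re im complex_eqI by auto
    then show ?thesis using c by simp
  qed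
qed


section \<open>The decomposition of H(R)\<close>

abbreviation HRs where "HRs \<equiv> HR br smult B H"
abbreviation HR0s where "HR0s \<equiv> HR0 br smult B H"

lemma HR_eq: "HRs = span (tv ` RR)" by (simp add: HR_def RR_def)

lemma HR0_iff: "h \<in> HR0s \<longleftrightarrow> h \<in> HRs \<and> (\<forall>h'\<in>HRs. B h h' = 0)" by (simp add: HR0_def)

lemma HR0_subspace: "subspace HR0s"
proof (rule subspaceI)
  show "0 \<in> HR0s" by (simp add: HR0_iff span_zero HR_def)
next
  fix x y assume "x \<in> HR0s" "y \<in> HR0s"
  then show "x + y \<in> HR0s" by (simp add: HR0_iff HR_def span_add B_addL)
next
  fix c x assume "x \<in> HR0s"
  then show "smult c x \<in> HR0s" by (simp add: HR0_iff HR_def span_scale B_smultL)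
qed

lemma B_span_right: assumes "\<forall>b\<in>S. B a b = 0" "b \<in> span S" shows "B a b = 0"
proof (rule span_induct[OF assms(2)])
  show "\<And>x. x \<in> S \<Longrightarrow> B a x = 0" using assms(1) by blast
  show "subspace {x. B a x = 0}"
    by (rule subspaceI) (auto simp: B_addR B_smultR)
qed

lemma B_span_both: assumes "\<forall>a\<in>S. \<forall>b\<in>S'. B a b = 0" "a \<in> span S" "b \<in> span S'" shows "B a b = 0"
proof -
  have "\<forall>a\<in>S. B b a = 0" using B_span_right[of S' _ b] assms(1,3) B_sym by metis
  then have "B b a = 0" using B_span_right assms(2) by blast
  then show ?thesis using B_sym by metis
qed

lemma tv_VS_HR: assumes "w \<in> VS" shows "tv w \<in> HRs"
proof -
  obtain c F where w: "w = rcomb c F" "finite F" "F \<subseteq> RR" using assms VS_iff by blast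
  have "tv w \<in> span (tv ` F)" using rcomb_span[OF w(2,3)] w(1) by simp
  moreover have "span (tv ` F) \<subseteq> HRs" unfolding HR_eq using w(3) by (intro span_mono) blast
  ultimately show ?thesis by blast
qed

lemma tv_VZ_HR0: assumes w: "w \<in> VZ" shows "tv w \<in> HR0s"
proof -
  have wS: "w \<in> VS" and o: "\<And>u. u \<in> VS \<Longrightarrow> rf w u = 0" using w VZ_iff by auto
  have "\<forall>b\<in>tv ` RR. B (tv w) b = 0"
  proof
    fix b assume "b \<in> tv ` RR"
    then obtain \<gamma> where g: "\<gamma> \<in> RR" "b = tv \<gamma>" by blast
    have "B (tv w) (tv \<gamma>) = rf w \<gamma>" by (simp add: rform_def)
    also have "\<dots> = 0" using o RR_VS[OF g(1)] by blast
    finally show "B (tv w) b = 0" using g by simp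
  qed
  then have "\<forall>h'\<in>HRs. B (tv w) h' = 0" unfolding HR_eq using B_span_right by blast
  then show ?thesis using tv_VS_HR[OF wS] HR0_iff by blast
qed

lemma iso_HR0: "\<delta> \<in> iso \<Longrightarrow> tv \<delta> \<in> HR0s"
  using tv_VZ_HR0 iso_VZ by blast

lemma Hdot_subspace: "subspace (Hdot br smult B H C Bs)"
  unfolding Hdot_def by (rule subspace_span)

lemma Hdot_HR: assumes C: "C \<in> cls" and bp: "bp C Bs" shows "Hdot br smult B H C Bs \<subseteq> HRs"
  unfolding Hdot_eq[OF C bp] HR_eq using bp_RR[OF C bp] by (intro span_mono) blast

lemma Hdot_orth:
  assumes C: "C \<in> cls" and D: "D \<in> cls" and CD: "C \<noteq> D" and bpC: "bp C Bs" and bpD: "bp D Bs'"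
    and x: "x \<in> Hdot br smult B H C Bs" and y: "y \<in> Hdot br smult B H D Bs'"
  shows "B x y = 0"
proof (rule B_span_both)
  show "x \<in> span (tv ` Bs)" using x Hdot_eq[OF C bpC] by simp
  show "y \<in> span (tv ` Bs')" using y Hdot_eq[OF D bpD] by simp
  show "\<forall>a\<in>tv ` Bs. \<forall>b\<in>tv ` Bs'. B a b = 0"
  proof (intro ballI)
    fix a b assume "a \<in> tv ` Bs" "b \<in> tv ` Bs'"
    then obtain \<beta> \<gamma> where bg: "\<beta> \<in> Bs" "\<gamma> \<in> Bs'" "a = tv \<beta>" "b = tv \<gamma>" by blast
    have "\<beta> \<in> C" "\<gamma> \<in> D" using bg bp_sub[OF bpC] bp_sub[OF bpD] by auto
    then have "rf \<beta> \<gamma> = 0" using cls_disj_orth[OF C D CD] by blast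
    then show "B a b = 0" using bg by (simp add: rform_def)
  qed
qed

lemma class_of: assumes "\<gamma> \<in> niso" shows "\<exists>C\<in>cls. \<gamma> \<in> C"
proof -
  have "Erel `` {\<gamma>} \<in> niso // Erel" using assms by (rule quotientI)
  moreover have "\<gamma> \<in> Erel `` {\<gamma>}" using assms Erel_equiv equiv_class_self by fast
  ultimately show ?thesis using cls_eq by blast
qed

definition Tset where
  "Tset bas X0 = {x0 + (\<Sum>C\<in>F. x C) | x0 x F. finite F \<and> F \<subseteq> cls \<and>
            x0 \<in> X0 \<and> (\<forall>C\<in>F. x C \<in> Hdot br smult B H C (bas C))}"

lemma Tset_subspace: assumes X0: "subspace X0" shows "subspace (Tset bas X0)"
proof (rule subspaceI)
  show "0 \<in> Tset bas X0" unfolding Tset_def using subspace_0[OF X0]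
    by (auto intro!: exI[of _ "0::'g"] exI[of _ "{}"])
next
  fix u v assume "u \<in> Tset bas X0" "v \<in> Tset bas X0"
  then obtain x0 x F y0 y G where u: "u = x0 + (\<Sum>C\<in>F. x C)" "finite F" "F \<subseteq> cls" "x0 \<in> X0"
      "\<forall>C\<in>F. x C \<in> Hdot br smult B H C (bas C)"
    and v: "v = y0 + (\<Sum>C\<in>G. y C)" "finite G" "G \<subseteq> cls" "y0 \<in> X0"
      "\<forall>C\<in>G. y C \<in> Hdot br smult B H C (bas C)"
    unfolding Tset_def by blast
  define z where "z C = (if C \<in> F then x C else 0) + (if C \<in> G then y C else 0)" for C
  have fu: "finite (F \<union> G)" using u v by simp
  have "(\<Sum>C\<in>F \<union> G. z C) = (\<Sum>C\<in>F \<union> G. (if C \<in> F then x C else 0)) + (\<Sum>C\<in>F \<union> G. (if C \<in> G then y C else 0))"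
    unfolding z_def by (rule sum.distrib)
  also have "(\<Sum>C\<in>F \<union> G. (if C \<in> F then x C else 0)) = (\<Sum>C\<in>(F \<union> G) \<inter> F. x C)"
    by (rule sum.inter_restrict[OF fu, symmetric])
  also have "(\<Sum>C\<in>F \<union> G. (if C \<in> G then y C else 0)) = (\<Sum>C\<in>(F \<union> G) \<inter> G. y C)"
    by (rule sum.inter_restrict[OF fu, symmetric])
  finally have zs: "(\<Sum>C\<in>F \<union> G. z C) = (\<Sum>C\<in>F. x C) + (\<Sum>C\<in>G. y C)"
    by (simp add: Int_absorb1)
  have zH: "\<forall>C\<in>F \<union> G. z C \<in> Hdot br smult B H C (bas C)"
  proof
    fix C assume "C \<in> F \<union> G"
    have s: "subspace (Hdot br smult B H C (bas C))" by (rule Hdot_subspace)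
    have "(if C \<in> F then x C else 0) \<in> Hdot br smult B H C (bas C)" using u(5) subspace_0[OF s] by auto
    moreover have "(if C \<in> G then y C else 0) \<in> Hdot br smult B H C (bas C)" using v(5) subspace_0[OF s] by auto
    ultimately show "z C \<in> Hdot br smult B H C (bas C)" unfolding z_def using subspace_add[OF s] by blast
  qed
  have "u + v = (x0 + y0) + (\<Sum>C\<in>F \<union> G. z C)" using u(1) v(1) zs by (simp add: algebra_simps)
  moreover have "x0 + y0 \<in> X0" using subspace_add[OF X0 u(4) v(4)] .
  moreover have "F \<union> G \<subseteq> cls" using u v by simp
  ultimately show "u + v \<in> Tset bas X0" unfolding Tset_def using fu zH by blast
next
  fix c u assume "u \<in> Tset bas X0"
  then obtain x0 x F where u: "u = x0 + (\<Sum>C\<in>F. x C)" "finite F" "F \<subseteq> cls" "x0 \<in> X0"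
      "\<forall>C\<in>F. x C \<in> Hdot br smult B H C (bas C)"
    unfolding Tset_def by blast
  have "smult c u = smult c x0 + (\<Sum>C\<in>F. smult c (x C))" using u(1) by (simp add: scale_right_distrib scale_sum_right)
  moreover have "smult c x0 \<in> X0" using subspace_scale[OF X0 u(4)] .
  moreover have "\<forall>C\<in>F. smult c (x C) \<in> Hdot br smult B H C (bas C)"
    using u(5) subspace_scale[OF Hdot_subspace] by blast
  ultimately show "smult c u \<in> Tset bas X0" unfolding Tset_def using u(2,3) by blast
qed

lemma Tset_HR:
  assumes bases: "\<forall>C\<in>cls. bp C (bas C)" and X0: "subspace X0"
    and isoX: "\<And>\<delta>. \<delta> \<in> iso \<Longrightarrow> tv \<delta> \<in> X0"
    and wX: "\<And>C \<alpha> n. C \<in> cls \<Longrightarrow> \<alpha> \<in> C \<Longrightarrow> ((\<forall>\<beta>\<in>bas C. n \<beta> \<ge> 0) \<or> (\<forall>\<beta>\<in>bas C. n \<beta> \<le> 0)) \<Longrightarrow>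
        (\<lambda>x. \<alpha> x - rcomb (\<lambda>\<beta>. real_of_int (n \<beta>)) (bas C) x) \<in> VZ \<Longrightarrow>
        tv (\<lambda>x. \<alpha> x - rcomb (\<lambda>\<beta>. real_of_int (n \<beta>)) (bas C) x) \<in> X0"
  shows "HRs \<subseteq> Tset bas X0"
  unfolding HR_eq
proof (rule span_minimal[OF _ Tset_subspace[OF X0]])
  show "tv ` RR \<subseteq> Tset bas X0"
  proof
    fix t assume "t \<in> tv ` RR"
    then obtain \<gamma> where g: "\<gamma> \<in> RR" "t = tv \<gamma>" by blast
    consider "\<gamma> \<in> iso" | "\<gamma> \<in> niso" using RR_split[OF g(1)] by blast
    then show "t \<in> Tset bas X0"
    proof cases
      case 1
      have "t = tv \<gamma> + (\<Sum>C\<in>{}. (\<lambda>_. 0) C)" using g by simp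
      then show ?thesis unfolding Tset_def using isoX[OF 1] by blast
    next
      case 2
      obtain C where C: "C \<in> cls" "\<gamma> \<in> C" using class_of[OF 2] by blast
      have bp: "bp C (bas C)" using bases C by blast
      obtain n where n: "(\<forall>\<beta>\<in>bas C. n \<beta> \<ge> 0) \<or> (\<forall>\<beta>\<in>bas C. n \<beta> \<le> 0)"
        "(\<lambda>x. \<gamma> x - rcomb (\<lambda>\<beta>. real_of_int (n \<beta>)) (bas C) x) \<in> VZ"
        using bp_expr[OF bp C(2)] by blast
      define R where "R = rcomb (\<lambda>\<beta>. real_of_int (n \<beta>)) (bas C)"
      define w where "w = (\<lambda>x. \<gamma> x - R x)"
      have wZ: "w \<in> VZ" using n(2) unfolding w_def R_def .
      have fin: "finite (bas C)" and BR: "bas C \<subseteq> RR" using bp_fin[OF bp] bp_RR[OF C(1) bp] by auto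
      have rR: "rep R" unfolding R_def by (rule rcomb_rep[OF fin BR])
      have rg: "rep \<gamma>" using RR_rep[OF g(1)] .
      have tw: "tv w = tv \<gamma> - tv R" unfolding w_def using rep_diff[OF rg rR] by blast
      have "R \<in> Rdot br smult B H C (bas C)"
      proof -
        have "R \<in> real_span (bas C)" unfolding R_def real_span_def using fin by blast
        moreover have "(\<lambda>x. R x - \<gamma> x) = (\<lambda>x. - w x)" unfolding w_def by (auto simp: algebra_simps)
        then have "(\<lambda>x. R x - \<gamma> x) \<in> VZ" using VZ_neg[OF wZ] by simp
        ultimately show ?thesis unfolding Rdot_def using C(2) by blast
      qed
      then have tR: "tv R \<in> Hdot br smult B H C (bas C)" unfolding Hdot_def by (intro span_base imageI)
      have "t = tv w + (\<Sum>C'\<in>{C}. (\<lambda>_. tv R) C')" using g tw by simp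
      moreover have "tv w \<in> X0" using wX[OF C n(1)] n(2) unfolding w_def R_def by blast
      ultimately show ?thesis unfolding Tset_def using C(1) tR by blast
    qed
  qed
qed

lemma Tset_sub_HR:
  assumes bases: "\<forall>C\<in>cls. bp C (bas C)" and X0: "X0 \<subseteq> HRs"
  shows "Tset bas X0 \<subseteq> HRs"
proof
  fix u assume "u \<in> Tset bas X0"
  then obtain x0 x F where u: "u = x0 + (\<Sum>C\<in>F. x C)" "finite F" "F \<subseteq> cls" "x0 \<in> X0"
      "\<forall>C\<in>F. x C \<in> Hdot br smult B H C (bas C)"
    unfolding Tset_def by blast
  have "\<forall>C\<in>F. x C \<in> HRs" using u(3,5) Hdot_HR bases by blast
  then have "(\<Sum>C\<in>F. x C) \<in> HRs" unfolding HR_eq by (intro span_sum) blast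
  moreover have "x0 \<in> HRs" using u(4) X0 by blast
  ultimately have "x0 + (\<Sum>C\<in>F. x C) \<in> HRs" unfolding HR_eq by (intro span_add)
  then show "u \<in> HRs" using u(1) by simp
qed

lemma direct:
  assumes bases: "\<forall>C\<in>cls. bp C (bas C)"
    and x0: "\<forall>y\<in>HRs. B x0 y = 0" and F: "finite F" "F \<subseteq> cls"
    and x: "\<forall>C\<in>F. x C \<in> Hdot br smult B H C (bas C)"
    and z: "x0 + (\<Sum>C\<in>F. x C) = 0"
  shows "x0 = 0 \<and> (\<forall>C\<in>F. x C = 0)"
proof -
  have xz: "x D = 0" if D: "D \<in> F" for D
  proof -
    have DC: "D \<in> cls" using D F by blast
    have bpD: "bp D (bas D)" using bases DC by blast
    show ?thesis
    proof (rule Hdot_nondeg[OF DC bpD])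
      show "x D \<in> Hdot br smult B H D (bas D)" using x D by blast
      show "\<forall>y\<in>Hdot br smult B H D (bas D). B (x D) y = 0"
      proof
        fix y assume y: "y \<in> Hdot br smult B H D (bas D)"
        have yH: "y \<in> HRs" using Hdot_HR[OF DC bpD] y by blast
        have o: "B (x C) y = 0" if "C \<in> F - {D}" for C
        proof -
          have "C \<in> cls" "C \<noteq> D" using that F by auto
          then show ?thesis using Hdot_orth[OF _ DC _ _ bpD _ y] bases x that by blast
        qed
        have "0 = B (x0 + (\<Sum>C\<in>F. x C)) y" using z by simp
        also have "\<dots> = B x0 y + (\<Sum>C\<in>F. B (x C) y)" by (simp add: B_addL B_sumL)
        also have "(\<Sum>C\<in>F. B (x C) y) = B (x D) y + (\<Sum>C\<in>F - {D}. B (x C) y)"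
          using sum.remove[OF F(1) D] by simp
        also have "(\<Sum>C\<in>F - {D}. B (x C) y) = 0" using o by simp
        finally show "B (x D) y = 0" using x0 yH by simp
      qed
    qed
  qed
  then have "(\<Sum>C\<in>F. x C) = 0" by simp
  then have "x0 = 0" using z by simp
  then show ?thesis using xz by blast
qed


section \<open>Height induction\<close>

abbreviation Wsp where "Wsp \<equiv> span (tv ` iso)"

definition Rn where "Rn Bs n = rcomb (\<lambda>\<beta>. real_of_int (n \<beta>)) Bs"
definition wf where "wf Bs \<alpha> n = (\<lambda>x. \<alpha> x - Rn Bs n x)"

lemma Rn_minus_one:
  assumes "finite Bs" "\<beta> \<in> Bs"
  shows "Rn Bs (\<lambda>b. n b - (if b = \<beta> then 1 else 0)) x = Rn Bs n x - \<beta> x"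
proof -
  have "Rn Bs (\<lambda>b. n b - (if b = \<beta> then 1 else 0)) x =
     (\<Sum>b\<in>Bs. complex_of_real (real_of_int (n b)) * b x - (if b = \<beta> then \<beta> x else 0))"
    unfolding Rn_def rcomb_def by (intro sum.cong) (auto simp: algebra_simps)
  also have "\<dots> = Rn Bs n x - \<beta> x"
    unfolding Rn_def rcomb_def using assms by (simp add: sum_subtractf sum.delta)
  finally show ?thesis .
qed

lemma Rn_zero: assumes "\<forall>b\<in>Bs. n b = 0" shows "Rn Bs n = (\<lambda>x. 0)"
  unfolding Rn_def rcomb_def using assms by (intro ext sum.neutral) simp

lemma Rn_neg: "Rn Bs (\<lambda>b. - n b) = (\<lambda>x. - Rn Bs n x)"
  unfolding Rn_def using rcomb_neg[of "\<lambda>b. real_of_int (n b)" Bs] by simp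

lemma height_base:
  assumes C: "C \<in> cls" and a: "\<alpha> \<in> C" and n: "\<forall>\<beta>\<in>Bs. n \<beta> \<ge> 0" "sum n Bs = 0" "finite Bs"
    and w: "wf Bs \<alpha> n \<in> VZ"
  shows False
proof -
  have "\<forall>b\<in>Bs. n b = 0" using n sum_nonneg_eq_0_iff by blast
  then have "Rn Bs n = (\<lambda>x. 0)" by (rule Rn_zero)
  then have "wf Bs \<alpha> n = \<alpha>" unfolding wf_def by simp
  then have "\<alpha> \<in> VZ" using w by simp
  moreover have aR: "\<alpha> \<in> RR" and a0: "rf \<alpha> \<alpha> \<noteq> 0" using cls_sub[OF C] a by (auto simp: niso_iff)
  ultimately show False using VZ_iff RR_VS by blast
qed

lemma height:
  assumes C: "C \<in> cls" and bp: "bp C Bs"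
  shows "\<forall>\<alpha> n. \<alpha> \<in> C \<and> (\<forall>\<beta>\<in>Bs. n \<beta> \<ge> 0) \<and> sum n Bs = int N \<and> wf Bs \<alpha> n \<in> VZ \<longrightarrow> tv (wf Bs \<alpha> n) \<in> Wsp"
proof (induction N)
  case 0
  have fin: "finite Bs" using bp_fin[OF bp] .
  show ?case using height_base[OF C _ _ _ fin] by auto
next
  case (Suc N)
  have fin: "finite Bs" and BR: "Bs \<subseteq> RR" and BC: "Bs \<subseteq> C" using bp_fin[OF bp] bp_RR[OF C bp] bp_sub[OF bp] by auto
  show ?case
  proof (intro allI impI, elim conjE)
    fix \<alpha> n assume a: "\<alpha> \<in> C" and nn: "\<forall>\<beta>\<in>Bs. n \<beta> \<ge> 0" and ns: "sum n Bs = int (Suc N)"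
      and w: "wf Bs \<alpha> n \<in> VZ"
    have an: "\<alpha> \<in> niso" using cls_sub[OF C] a by blast
    have aR: "\<alpha> \<in> RR" and a0: "rf \<alpha> \<alpha> \<noteq> 0" using an by (auto simp: niso_iff)
    have ra: "rep \<alpha>" using RR_rep[OF aR] .
    have rR: "rep (Rn Bs n)" unfolding Rn_def by (rule rcomb_rep[OF fin BR])
    have "rf (wf Bs \<alpha> n) \<alpha> = 0" using w RR_VS[OF aR] VZ_iff by blast
    then have "rf \<alpha> \<alpha> = rf (Rn Bs n) \<alpha>"
      using rf_bilin(5)[OF ra rR ra] unfolding wf_def by simp
    also have "\<dots> = (\<Sum>\<beta>\<in>Bs. of_real (real_of_int (n \<beta>)) * rf \<beta> \<alpha>)"
      unfolding Rn_def by (rule rcomb_rf_left[OF fin BR ra])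
    finally have e1: "rf \<alpha> \<alpha> = (\<Sum>\<beta>\<in>Bs. of_int (n \<beta>) * rf \<beta> \<alpha>)" by simp
    define k where "k \<beta> = (SOME k::int. ci \<beta> \<alpha> = of_int k)" for \<beta>
    have k: "ci \<beta> \<alpha> = of_int (k \<beta>)" if "\<beta> \<in> Bs" for \<beta>
    proof -
      have "\<exists>k::int. ci \<beta> \<alpha> = of_int k" using ci_int[OF an] that BR by blast
      then show ?thesis unfolding k_def by (rule someI_ex)
    qed
    have "(2::complex) = 2 * rf \<alpha> \<alpha> / rf \<alpha> \<alpha>" using a0 by simp
    also have "\<dots> = (\<Sum>\<beta>\<in>Bs. of_int (n \<beta>) * ci \<beta> \<alpha>)"
      unfolding e1 ci_def by (simp add: sum_divide_distrib sum_distrib_left mult.left_commute)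
    also have "\<dots> = of_int (\<Sum>\<beta>\<in>Bs. n \<beta> * k \<beta>)" using k by simp
    finally have "of_int (\<Sum>\<beta>\<in>Bs. n \<beta> * k \<beta>) = (of_int 2 :: complex)" by simp
    then have "(\<Sum>\<beta>\<in>Bs. n \<beta> * k \<beta>) = 2" by (simp only: of_int_eq_iff)
    then obtain \<beta> where b: "\<beta> \<in> Bs" "n \<beta> > 0" "k \<beta> > 0"
    proof -
      assume r: "\<And>\<beta>. \<beta> \<in> Bs \<Longrightarrow> 0 < n \<beta> \<Longrightarrow> 0 < k \<beta> \<Longrightarrow> thesis"
      have "(\<Sum>\<beta>\<in>Bs. n \<beta> * k \<beta>) \<le> 0" if "\<not> thesis"
      proof (rule sum_nonpos)
        fix b assume bB: "b \<in> Bs"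
        show "n b * k b \<le> 0"
        proof (cases "n b = 0")
          case True then show ?thesis by simp
        next
          case False
          then have "n b > 0" using nn bB by force
          then have "k b \<le> 0" using r[OF bB] that by force
          then show ?thesis using \<open>n b > 0\<close> by (simp add: mult_nonneg_nonpos)
        qed
      qed
      then show thesis using \<open>(\<Sum>\<beta>\<in>Bs. n \<beta> * k \<beta>) = 2\<close> by force
    qed
    have bR: "\<beta> \<in> RR" and bC: "\<beta> \<in> C" using b BR BC by auto
    have rb: "rep \<beta>" using RR_rep[OF bR] .
    have "Re (ci \<beta> \<alpha>) > 0" using k[OF b(1)] b(3) by simp
    then have "(\<lambda>h. \<beta> h - \<alpha> h) \<in> RR" by (rule root_diff_exists[OF an bR])
    from root_neg[OF this[unfolded RR_def], folded RR_def]
    have gR: "(\<lambda>h. \<alpha> h - \<beta> h) \<in> RR" by simp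
    define \<gamma> where "\<gamma> = (\<lambda>h. \<alpha> h - \<beta> h)"
    have gR': "\<gamma> \<in> RR" using gR \<gamma>_def by simp
    have rg: "rep \<gamma>" using RR_rep[OF gR'] .
    define n' where "n' b = n b - (if b = \<beta> then 1 else 0)" for b
    have n'nn: "\<forall>b\<in>Bs. n' b \<ge> 0" using nn b(2) by (auto simp: n'_def)
    have n's: "sum n' Bs = int N"
      using ns b(1) fin by (simp add: n'_def sum_subtractf sum.delta)
    have Rn': "Rn Bs n' x = Rn Bs n x - \<beta> x" for x unfolding n'_def by (rule Rn_minus_one[OF fin b(1)])
    have weq: "wf Bs \<gamma> n' = wf Bs \<alpha> n" unfolding wf_def \<gamma>_def by (rule ext) (simp add: Rn')
    consider "\<gamma> \<in> iso" | "\<gamma> \<in> niso" using RR_split[OF gR'] by blast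
    then show "tv (wf Bs \<alpha> n) \<in> Wsp"
    proof cases
      case 2
      have gC: "\<gamma> \<in> C"
      proof (cases "rf \<alpha> \<gamma> \<noteq> 0")
        case True then show ?thesis using cls_closed[OF C a 2] by blast
      next
        case False
        show ?thesis
        proof (cases "rf \<beta> \<gamma> \<noteq> 0")
          case True then show ?thesis using cls_closed[OF C bC 2] by blast
        next
          case False': False
          have "rf \<gamma> \<gamma> = rf \<alpha> \<gamma> - rf \<beta> \<gamma>" unfolding \<gamma>_def[symmetric]
            using rf_bilin(5)[OF ra rb rg] \<gamma>_def by simp
          then have "rf \<gamma> \<gamma> = 0" using False False' by simp
          then show ?thesis using 2 by (simp add: niso_iff)
        qed
      qed
      have "wf Bs \<gamma> n' \<in> VZ" using weq w by simp
      then have "tv (wf Bs \<gamma> n') \<in> Wsp" using Suc.IH[rule_format, of \<gamma> n'] gC n'nn n's by blast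
      then show ?thesis using weq by simp
    next
      case 1
      have gZ: "\<gamma> \<in> VZ" using iso_VZ[OF 1] .
      have Req: "Rn Bs n' = (\<lambda>x. \<gamma> x - wf Bs \<alpha> n x)"
        by (rule ext) (simp add: Rn' wf_def \<gamma>_def)
      have rw: "rep (wf Bs \<alpha> n)" using VS_rep w VZ_iff by blast
      have R'S: "Rn Bs n' \<in> VS" unfolding Rn_def VS_iff using fin BR by blast
      have "Rn Bs n' \<in> VZ"
      proof -
        have "rf (Rn Bs n') u = 0" if u: "u \<in> VS" for u
        proof -
          have "rf (Rn Bs n') u = rf \<gamma> u - rf (wf Bs \<alpha> n) u"
            unfolding Req by (rule rf_bilin(5)[OF rg rw VS_rep[OF u]])
          also have "\<dots> = 0" using gZ w u VZ_iff by simp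
          finally show ?thesis .
        qed
        then show ?thesis using R'S VZ_iff by blast
      qed
      then have "\<forall>b\<in>Bs. real_of_int (n' b) = 0" using bp_indep[OF bp] unfolding Rn_def by blast
      then have "\<forall>b\<in>Bs. n' b = 0" by simp
      then have "Rn Bs n' = (\<lambda>x. 0)" by (rule Rn_zero)
      then have "\<forall>x. \<gamma> x - wf Bs \<alpha> n x = 0" using Req by (metis)
      then have "wf Bs \<alpha> n = \<gamma>" by (intro ext) simp
      then show ?thesis using 1 by (simp add: span_base)
    qed
  qed
qed

lemma wX_iso:
  assumes C: "C \<in> cls" and bp: "bp C Bs" and a: "\<alpha> \<in> C"
    and n: "(\<forall>\<beta>\<in>Bs. n \<beta> \<ge> 0) \<or> (\<forall>\<beta>\<in>Bs. n \<beta> \<le> 0)" and w: "wf Bs \<alpha> n \<in> VZ"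
  shows "tv (wf Bs \<alpha> n) \<in> Wsp"
  using n
proof
  assume nn: "\<forall>\<beta>\<in>Bs. n \<beta> \<ge> 0"
  have "sum n Bs = int (nat (sum n Bs))" using nn by (simp add: sum_nonneg)
  then show ?thesis using height[OF C bp, of "nat (sum n Bs)", rule_format, of \<alpha> n] a nn w by blast
next
  assume np: "\<forall>\<beta>\<in>Bs. n \<beta> \<le> 0"
  have an: "\<alpha> \<in> niso" using cls_sub[OF C] a by blast
  have a0: "rf \<alpha> \<alpha> \<noteq> 0" using an by (simp add: niso_iff)
  have ra: "rep \<alpha>" using niso_rep[OF an] .
  have nan: "(\<lambda>h. - \<alpha> h) \<in> niso" by (rule niso_neg[OF an])
  have "rf \<alpha> (\<lambda>h. - \<alpha> h) = - rf \<alpha> \<alpha>" by (rule rf_neg2[OF ra ra])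
  then have "rf \<alpha> (\<lambda>h. - \<alpha> h) \<noteq> 0" using a0 by simp
  then have naC: "(\<lambda>h. - \<alpha> h) \<in> C" using cls_closed[OF C a nan] by blast
  have eq: "wf Bs (\<lambda>h. - \<alpha> h) (\<lambda>b. - n b) = (\<lambda>x. - wf Bs \<alpha> n x)"
    unfolding wf_def Rn_neg by auto
  have w': "wf Bs (\<lambda>h. - \<alpha> h) (\<lambda>b. - n b) \<in> VZ" unfolding eq by (rule VZ_neg[OF w])
  have nn: "\<forall>\<beta>\<in>Bs. - n \<beta> \<ge> 0" using np by auto
  have "sum (\<lambda>b. - n b) Bs = int (nat (sum (\<lambda>b. - n b) Bs))" using nn by (simp add: sum_nonneg)
  then have t: "tv (wf Bs (\<lambda>h. - \<alpha> h) (\<lambda>b. - n b)) \<in> Wsp"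
    using height[OF C bp, of "nat (sum (\<lambda>b. - n b) Bs)", rule_format, of "\<lambda>h. - \<alpha> h" "\<lambda>b. - n b"] naC nn w' by blast
  have rw: "rep (wf Bs \<alpha> n)" using VS_rep w VZ_iff by blast
  have "tv (wf Bs (\<lambda>h. - \<alpha> h) (\<lambda>b. - n b)) = - tv (wf Bs \<alpha> n)"
    unfolding eq using rep_neg[OF rw] by blast
  then have "- tv (wf Bs \<alpha> n) \<in> Wsp" using t by simp
  then have "- (- tv (wf Bs \<alpha> n)) \<in> Wsp" by (rule span_neg)
  then show ?thesis by simp
qed


lemma main:
  assumes bases: "\<forall>C\<in>root_classes br smult B H. base_preimage br smult B H C (bas C)"
  shows "(\<forall>C\<in>root_classes br smult B H. \<forall>x\<in>Hdot br smult B H C (bas C).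
            (\<forall>y\<in>Hdot br smult B H C (bas C). B x y = 0) \<longrightarrow> x = 0)
    \<and> HR br smult B H = {x0 + (\<Sum>C\<in>F. x C) | x0 x F. finite F \<and> F \<subseteq> root_classes br smult B H \<and>
            x0 \<in> HR0 br smult B H \<and> (\<forall>C\<in>F. x C \<in> Hdot br smult B H C (bas C))}
    \<and> (\<forall>x0 x F. finite F \<and> F \<subseteq> root_classes br smult B H \<and> x0 \<in> HR0 br smult B H \<and>
            (\<forall>C\<in>F. x C \<in> Hdot br smult B H C (bas C)) \<and> x0 + (\<Sum>C\<in>F. x C) = 0
            \<longrightarrow> x0 = 0 \<and> (\<forall>C\<in>F. x C = 0))
    \<and> HR0 br smult B H = module.span smult (tvec B H ` isotropic_roots br smult B H)"
proof (intro conjI)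
  show "\<forall>C\<in>cls. \<forall>x\<in>Hdot br smult B H C (bas C). (\<forall>y\<in>Hdot br smult B H C (bas C). B x y = 0) \<longrightarrow> x = 0"
    using Hdot_nondeg bases by blast
  have HR0_HR: "HR0s \<subseteq> HRs" using HR0_iff by blast
  have T1: "HRs \<subseteq> Tset bas HR0s"
  proof (rule Tset_HR[OF bases HR0_subspace])
    show "\<And>\<delta>. \<delta> \<in> iso \<Longrightarrow> tv \<delta> \<in> HR0s" by (rule iso_HR0)
    show "\<And>C \<alpha> n. C \<in> cls \<Longrightarrow> \<alpha> \<in> C \<Longrightarrow> ((\<forall>\<beta>\<in>bas C. n \<beta> \<ge> 0) \<or> (\<forall>\<beta>\<in>bas C. n \<beta> \<le> 0)) \<Longrightarrow>
        (\<lambda>x. \<alpha> x - rcomb (\<lambda>\<beta>. real_of_int (n \<beta>)) (bas C) x) \<in> VZ \<Longrightarrow>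
        tv (\<lambda>x. \<alpha> x - rcomb (\<lambda>\<beta>. real_of_int (n \<beta>)) (bas C) x) \<in> HR0s"
      using tv_VZ_HR0 by blast
  qed
  have T2: "Tset bas HR0s \<subseteq> HRs" by (rule Tset_sub_HR[OF bases HR0_HR])
  show "HRs = {x0 + (\<Sum>C\<in>F. x C) | x0 x F. finite F \<and> F \<subseteq> cls \<and>
            x0 \<in> HR0s \<and> (\<forall>C\<in>F. x C \<in> Hdot br smult B H C (bas C))}"
    using T1 T2 unfolding Tset_def by blast
  show dir: "\<forall>x0 x F. finite F \<and> F \<subseteq> cls \<and> x0 \<in> HR0s \<and>
            (\<forall>C\<in>F. x C \<in> Hdot br smult B H C (bas C)) \<and> x0 + (\<Sum>C\<in>F. x C) = 0
            \<longrightarrow> x0 = 0 \<and> (\<forall>C\<in>F. x C = 0)"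
  proof (intro allI impI, elim conjE)
    fix x0 x F assume F: "finite F" "F \<subseteq> cls" and x0: "x0 \<in> HR0s"
      and x: "\<forall>C\<in>F. x C \<in> Hdot br smult B H C (bas C)" and z: "x0 + (\<Sum>C\<in>F. x C) = 0"
    have "\<forall>y\<in>HRs. B x0 y = 0" using x0 HR0_iff by blast
    then show "x0 = 0 \<and> (\<forall>C\<in>F. x C = 0)" by (rule direct[OF bases _ F x z])
  qed
  have iso_eq: "isotropic_roots br smult B H = iso" by (simp add: iso_def)
  show "HR0s = span (tv ` isotropic_roots br smult B H)"
    unfolding iso_eq
  proof
    show "Wsp \<subseteq> HR0s" using iso_HR0 HR0_subspace by (intro span_minimal) auto
    show "HR0s \<subseteq> Wsp"
    proof
      fix h assume h: "h \<in> HR0s"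
      have T3: "HRs \<subseteq> Tset bas Wsp"
      proof (rule Tset_HR[OF bases subspace_span])
        show "\<And>\<delta>. \<delta> \<in> iso \<Longrightarrow> tv \<delta> \<in> Wsp" by (simp add: span_base)
        fix C \<alpha> and n :: "('g \<Rightarrow> complex) \<Rightarrow> int"
        assume C: "C \<in> cls" and a: "\<alpha> \<in> C" and n: "(\<forall>\<beta>\<in>bas C. n \<beta> \<ge> 0) \<or> (\<forall>\<beta>\<in>bas C. n \<beta> \<le> 0)"
          and w: "(\<lambda>x. \<alpha> x - rcomb (\<lambda>\<beta>. real_of_int (n \<beta>)) (bas C) x) \<in> VZ"
        have bp: "bp C (bas C)" using bases C by blast
        have "tv (wf (bas C) \<alpha> n) \<in> Wsp"
          by (rule wX_iso[OF C bp a n]) (use w in \<open>simp add: wf_def Rn_def\<close>)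
        then show "tv (\<lambda>x. \<alpha> x - rcomb (\<lambda>\<beta>. real_of_int (n \<beta>)) (bas C) x) \<in> Wsp"
          by (simp add: wf_def Rn_def)
      qed
      have "h \<in> HRs" using h HR0_HR by blast
      then have "h \<in> Tset bas Wsp" using T3 by blast
      then obtain w x F where hw: "h = w + (\<Sum>C\<in>F. x C)" "finite F" "F \<subseteq> cls" "w \<in> Wsp"
          "\<forall>C\<in>F. x C \<in> Hdot br smult B H C (bas C)"
        unfolding Tset_def by blast
      have wH: "w \<in> HR0s" using hw(4) iso_HR0 HR0_subspace span_minimal by blast
      have d: "w - h \<in> HR0s" using subspace_diff[OF HR0_subspace wH h] .
      have "(w - h) + (\<Sum>C\<in>F. x C) = 0" using hw(1) by simp
      then have "w - h = 0" using dir hw(2,3,5) d by blast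
      then show "h \<in> Wsp" using hw(4) by simp
    qed
  qed
qed

end

theorem lemma2p4:
  fixes smult :: "complex \<Rightarrow> 'g::ab_group_add \<Rightarrow> 'g"
    and br :: "'g \<Rightarrow> 'g \<Rightarrow> 'g"
    and B :: "'g \<Rightarrow> 'g \<Rightarrow> complex"
    and H :: "'g set"
    and bas :: "('g \<Rightarrow> complex) set \<Rightarrow> ('g \<Rightarrow> complex) set"
  assumes grla: "GRLA smult br B H"
    and bases: "\<forall>C\<in>root_classes br smult B H. base_preimage br smult B H C (bas C)"
  shows "(\<forall>C\<in>root_classes br smult B H. \<forall>x\<in>Hdot br smult B H C (bas C).
            (\<forall>y\<in>Hdot br smult B H C (bas C). B x y = 0) \<longrightarrow> x = 0)
    \<and> HR br smult B H = {x0 + (\<Sum>C\<in>F. x C) | x0 x F. finite F \<and> F \<subseteq> root_classes br smult B H \<and>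
            x0 \<in> HR0 br smult B H \<and> (\<forall>C\<in>F. x C \<in> Hdot br smult B H C (bas C))}
    \<and> (\<forall>x0 x F. finite F \<and> F \<subseteq> root_classes br smult B H \<and> x0 \<in> HR0 br smult B H \<and>
            (\<forall>C\<in>F. x C \<in> Hdot br smult B H C (bas C)) \<and> x0 + (\<Sum>C\<in>F. x C) = 0
            \<longrightarrow> x0 = 0 \<and> (\<forall>C\<in>F. x C = 0))
    \<and> HR0 br smult B H = module.span smult (tvec B H ` isotropic_roots br smult B H)"
proof -
  interpret grla_ctx smult br B H by (rule grla_ctx.intro[OF grla])
  show ?thesis by (rule main[OF bases])
qed

end
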